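(* Let $d,f\in\mathbb{Z}$ with $d\ge3$ and $f\in\{0,1,\dots,d-1\}$, and let $B\subseteq\mathbb{R}^2$ with $|B|=\binom{f+2}{2}$ be such that $B$ is not contained in any element of $\mathcal{C}_{\le f}$. Then for all $e\in\{1,\dots,d-1\}$ and $D\subseteq B$, \[ \max\{\tau_e(B,D),\mu_e(B,D)\}<\binom{d+2}{2}. \]
   Context: For $k\in\mathbb{Z}^+$, a curve of degree $k$ is the zero set in $\mathbb{R}^2$ of a polynomial in $\mathbb{R}[x,y]$ of degree exactly $k$; $\mathcal{C}_k$ is the family of such curves, $\mathcal{C}_{\le k}:=\bigcup_{j=1}^k\mathcal{C}_j$, $\mathcal{C}_{\le0}:=\emptyset$. For $k\in\mathbb{Z}^+$ let $I_k=\{(i,j)\in\mathbb{Z}_{\ge 0}^2: 1\le i+j\le k\}$ and $\psi_k:\mathbb{R}^2\to\mathbb{R}^{\binom{k+2}{2}-1}$, $\psi_k(a_1,a_2)=(a_1^ia_2^j)_{(i,j)\in I_k}$. $\mathrm{Fl}(S)$ is the affine hull of $S$ ($\mathrm{Fl}(\emptyset)=\emptyset$, $\dim\emptyset=-1$). With $d$ fixed, for $e\in\{1,\dots,d-1\}$, finite $B\subseteq\mathbb{R}^2$ and $D\subseteq B$: $V_e(D):=\mathrm{Fl}(\psi_e(D))$; $W_e(B,D):=\mathrm{Fl}\big(\psi_{d-e}(B\setminus\psi_e^{-1}(V_e(D)))\big)$; $\alpha_e(D):=\binom{e+2}{2}-2-\dim V_e(D)$; $\beta_e(B,D):=\binom{d-e+2}{2}-3-\dim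 W_e(B,D)$; $\gamma_e(B,D):=|V_e(D)\cap\psi_e(B)|$; $\mu_e(B,D):=0$ if $\alpha_e(D)<0$, else $\mu_e(B,D):=\alpha_e(D)+\gamma_e(B,D)+\binom{d-e+2}{2}$; $\tau_e(B,D):=0$ if $\min\{\alpha_e(D),\beta_e(B,D)\}<0$ or $\gamma_e(B,D)>\binom{d+2}{2}-\binom{d-e+2}{2}-1$; $:=\alpha_e(D)+\beta_e(B,D)+|B|+2$ if $\min\{\alpha_e(D),\beta_e(B,D)\}\ge0$ and $\gamma_e(B,D)=\binom{d+2}{2}-\binom{d-e+2}{2}-1$; $:=\alpha_e(D)+\beta_e(B,D)+|B|+3$ if $\min\{\alpha_e(D),\beta_e(B,D)\}\ge0$ and $\gamma_e(B,D)<\binom{d+2}{2}-\binom{d-e+2}{2}-1$. *)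

theory Defs
  imports "HOL-Analysis.Analysis"
begin

definition exps :: "nat \<Rightarrow> (nat \<times> nat) set" where
  "exps k = {(i, j). i + j \<le> k}"

definition poly2_eval :: "nat \<Rightarrow> (nat \<times> nat \<Rightarrow> real) \<Rightarrow> real \<times> real \<Rightarrow> real" where
  "poly2_eval k c p = (\<Sum>(i, j)\<in>exps k. c (i, j) * fst p ^ i * snd p ^ j)"

definition curve_of_degree :: "nat \<Rightarrow> (real \<times> real) set \<Rightarrow> bool" where
  "curve_of_degree k C \<longleftrightarrow>
     (\<exists>c. (\<forall>i j. k < i + j \<longrightarrow> c (i, j) = 0) \<and>
          (\<exists>i j. i + j = k \<and> c (i, j) \<noteq> 0) \<and>
          C = {p. poly2_eval k c p = 0})"

text \<open>Membership in the family C_{\<le>k} (empty for k = 0).\<close>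
definition curve_le :: "nat \<Rightarrow> (real \<times> real) set \<Rightarrow> bool" where
  "curve_le k C \<longleftrightarrow> (\<exists>j\<in>{1..k}. curve_of_degree j C)"

text \<open>R^{I_k} is represented as functions (nat \<times> nat) \<Rightarrow> real vanishing outside I_k.\<close>
definition psi :: "nat \<Rightarrow> real \<times> real \<Rightarrow> (nat \<times> nat \<Rightarrow> real)" where
  "psi k a = (\<lambda>(i, j). if 1 \<le> i + j \<and> i + j \<le> k then fst a ^ i * snd a ^ j else 0)"

definition Fl :: "('i \<Rightarrow> real) set \<Rightarrow> ('i \<Rightarrow> real) set" where
  "Fl S = {x. \<exists>T u. finite T \<and> T \<noteq> {} \<and> T \<subseteq> S \<and> sum u T = 1 \<and>
                    x = (\<lambda>i. \<Sum>t\<in>T. u t * t i)}"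

definition aff_indep :: "('i \<Rightarrow> real) set \<Rightarrow> bool" where
  "aff_indep T \<longleftrightarrow> finite T \<and>
     (\<forall>u. sum u T = 0 \<and> (\<forall>i. (\<Sum>t\<in>T. u t * t i) = 0) \<longrightarrow> (\<forall>t\<in>T. u t = 0))"

text \<open>Dimension of a flat F: (maximal size of an affinely independent subset) - 1;
  this gives -1 for the empty set.\<close>
definition flat_dim :: "('i \<Rightarrow> real) set \<Rightarrow> int" where
  "flat_dim F = int (Max {card T | T. T \<subseteq> F \<and> aff_indep T}) - 1"

definition V_e :: "nat \<Rightarrow> (real \<times> real) set \<Rightarrow> (nat \<times> nat \<Rightarrow> real) set" where
  "V_e e D = Fl (psi e ` D)"

definition W_e :: "nat \<Rightarrow> nat \<Rightarrow> (real \<times> real) set \<Rightarrow> (real \<times> real) set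
                    \<Rightarrow> (nat \<times> nat \<Rightarrow> real) set" where
  "W_e d e B D = Fl (psi (d - e) ` (B - {a. psi e a \<in> V_e e D}))"

definition alpha_e :: "nat \<Rightarrow> (real \<times> real) set \<Rightarrow> int" where
  "alpha_e e D = int ((e + 2) choose 2) - 2 - flat_dim (V_e e D)"

definition beta_e :: "nat \<Rightarrow> nat \<Rightarrow> (real \<times> real) set \<Rightarrow> (real \<times> real) set \<Rightarrow> int" where
  "beta_e d e B D = int ((d - e + 2) choose 2) - 3 - flat_dim (W_e d e B D)"

definition gamma_e :: "nat \<Rightarrow> (real \<times> real) set \<Rightarrow> (real \<times> real) set \<Rightarrow> nat" where
  "gamma_e e B D = card (V_e e D \<inter> psi e ` B)"

definition mu_e :: "nat \<Rightarrow> nat \<Rightarrow> (real \<times> real) set \<Rightarrow> (real \<times> real) set \<Rightarrow> int" where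
  "mu_e d e B D =
     (if alpha_e e D < 0 then 0
      else alpha_e e D + int (gamma_e e B D) + int ((d - e + 2) choose 2))"

definition tau_e :: "nat \<Rightarrow> nat \<Rightarrow> (real \<times> real) set \<Rightarrow> (real \<times> real) set \<Rightarrow> int" where
  "tau_e d e B D =
     (let a = alpha_e e D; b = beta_e d e B D; g = int (gamma_e e B D);
          m = int ((d + 2) choose 2) - int ((d - e + 2) choose 2) - 1
      in if min a b < 0 \<or> g > m then 0
         else if g = m then a + b + int (card B) + 2
         else a + b + int (card B) + 3)"

end

theory Submission
  imports Defs
begin

lemma G_lemma:
  fixes A :: "'j \<Rightarrow> 'i \<Rightarrow> real"
  assumes "finite I" "finite J" "card I < card J"
  shows "\<exists>c. (\<exists>j\<in>J. c j \<noteq> 0) \<and> (\<forall>i\<in>I. (\<Sum>j\<in>J. c j * A j i) = 0)"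
  using assms
proof (induction I arbitrary: J A rule: finite_induct)
  case empty
  then obtain j0 where "j0 \<in> J" by fastforce
  then show ?case by (intro exI[of _ "\<lambda>j. if j = j0 then 1 else 0"]) auto
next
  case (insert i0 I)
  show ?case
  proof (cases "\<forall>j\<in>J. A j i0 = 0")
    case True
    from insert.IH[of J A] insert.prems insert.hyps obtain c where
      c: "\<exists>j\<in>J. c j \<noteq> 0" "\<forall>i\<in>I. (\<Sum>j\<in>J. c j * A j i) = 0" by auto
    show ?thesis using c True by (intro exI[of _ c]) auto
  next
    case False
    then obtain j0 where j0: "j0 \<in> J" "A j0 i0 \<noteq> 0" by auto
    define J' where "J' = J - {j0}"
    define A' where "A' = (\<lambda>j i. A j i - (A j i0 / A j0 i0) * A j0 i)"
    have fJ': "finite J'" using insert.prems J'_def by auto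
    have cJ': "card I < card J'" using insert.prems insert.hyps j0 J'_def by auto
    from insert.IH[OF fJ' cJ', of A'] obtain c' where
      c': "\<exists>j\<in>J'. c' j \<noteq> 0" "\<forall>i\<in>I. (\<Sum>j\<in>J'. c' j * A' j i) = 0" by auto
    define c0 where "c0 = - (\<Sum>j\<in>J'. c' j * A j i0) / A j0 i0"
    define c where "c = (\<lambda>j. if j = j0 then c0 else c' j)"
    have J: "J = insert j0 J'" "j0 \<notin> J'" using j0 J'_def by auto
    have sumJ: "(\<Sum>j\<in>J. c j * A j i) = c0 * A j0 i + (\<Sum>j\<in>J'. c' j * A j i)" for i
    proof -
      have "(\<Sum>j\<in>J. c j * A j i) = c j0 * A j0 i + (\<Sum>j\<in>J'. c j * A j i)"
        using J fJ' by (simp add: sum.insert)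
      also have "(\<Sum>j\<in>J'. c j * A j i) = (\<Sum>j\<in>J'. c' j * A j i)"
        using J by (intro sum.cong) (auto simp: c_def)
      finally show ?thesis by (simp add: c_def)
    qed
    have "\<forall>i\<in>insert i0 I. (\<Sum>j\<in>J. c j * A j i) = 0"
    proof
      fix i assume "i \<in> insert i0 I"
      then show "(\<Sum>j\<in>J. c j * A j i) = 0"
      proof
        assume "i = i0"
        then show ?thesis using j0 by (simp add: sumJ c0_def)
      next
        assume i: "i \<in> I"
        have "(\<Sum>j\<in>J'. c' j * A' j i) = (\<Sum>j\<in>J'. c' j * A j i) - (\<Sum>j\<in>J'. c' j * A j i0) / A j0 i0 * A j0 i"
          unfolding A'_def by (simp add: right_diff_distrib sum_subtractf sum_distrib_left sum_distrib_right sum_divide_distrib mult_ac)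
        then have "(\<Sum>j\<in>J'. c' j * A j i) + c0 * A j0 i = 0"
          using c'(2) i by (simp add: c0_def)
        then show ?thesis by (simp add: sumJ)
      qed
    qed
    moreover have "\<exists>j\<in>J. c j \<noteq> 0" using c'(1) J by (auto simp: c_def)
    ultimately show ?thesis by blast
  qed
qed

declare split_paired_All[simp del] split_paired_Ex[simp del]

definition mdeg :: "nat \<times> nat \<Rightarrow> nat" where "mdeg m = fst m + snd m"
definition mle :: "nat \<times> nat \<Rightarrow> nat \<times> nat \<Rightarrow> bool" where
  "mle m m' \<longleftrightarrow> mdeg m < mdeg m' \<or> (mdeg m = mdeg m' \<and> fst m \<le> fst m')"
fun tri :: "nat \<Rightarrow> nat" where "tri 0 = 0" | "tri (Suc n) = tri n + Suc n"
definition key :: "nat \<times> nat \<Rightarrow> nat" where "key m = tri (mdeg m) + fst m"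
definition madd :: "nat \<times> nat \<Rightarrow> nat \<times> nat \<Rightarrow> nat \<times> nat" where
  "madd m s = (fst m + fst s, snd m + snd s)"

lemma tri_mono: "a \<le> b \<Longrightarrow> tri a \<le> tri b"
  by (induction b) (auto simp: le_Suc_eq)

lemma tri_lt: "a < b \<Longrightarrow> tri a + a < tri b"
proof (induction b)
  case 0 then show ?case by simp
next
  case (Suc b)
  then show ?case using tri_mono[of a b] by (auto simp: less_Suc_eq)
qed

lemma key_le_iff: "key m \<le> key m' \<longleftrightarrow> mle m m'"
proof -
  have f: "fst m \<le> mdeg m" "fst m' \<le> mdeg m'" by (auto simp: mdeg_def)
  consider "mdeg m < mdeg m'" | "mdeg m' < mdeg m" | "mdeg m = mdeg m'" by linarith
  then show ?thesis
  proof cases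
    case 1 then show ?thesis using tri_lt[OF 1] f by (auto simp: key_def mle_def)
  next
    case 2 then show ?thesis using tri_lt[OF 2] f by (auto simp: key_def mle_def)
  next
    case 3 then show ?thesis by (auto simp: key_def mle_def)
  qed
qed

lemma mle_refl[simp]: "mle m m" by (auto simp: mle_def)
lemma mle_total: "mle m m' \<or> mle m' m" by (auto simp: mle_def)
lemma mle_trans: "mle a b \<Longrightarrow> mle b c \<Longrightarrow> mle a c" by (auto simp: mle_def)
lemma mle_antisym: "mle a b \<Longrightarrow> mle b a \<Longrightarrow> a = b"
  by (cases a; cases b) (auto simp: mle_def mdeg_def)
lemma mle_deg: "mle a b \<Longrightarrow> mdeg a \<le> mdeg b" by (auto simp: mle_def)

lemma mdeg_madd[simp]: "mdeg (madd a b) = mdeg a + mdeg b"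
  by (simp add: mdeg_def madd_def)

lemma mle_madd: "mle a b \<Longrightarrow> mle c d \<Longrightarrow> mle (madd a c) (madd b d)"
  by (auto simp: mle_def madd_def mdeg_def)

lemma mless_madd: "mle a b \<Longrightarrow> a \<noteq> b \<Longrightarrow> mle c d \<Longrightarrow> madd a c \<noteq> madd b d"
  by (cases a; cases b; cases c; cases d) (auto simp: mle_def madd_def mdeg_def)

lemma exists_max:
  assumes "finite S" "S \<noteq> {}"
  shows "\<exists>m\<in>S. \<forall>m'\<in>S. mle m' m"
proof -
  obtain m where m: "m \<in> S" "key m = Max (key ` S)"
    using assms by (metis (mono_tags, lifting) Max_in finite_imageI image_iff image_is_empty)
  have "\<forall>m'\<in>S. mle m' m" using m assms by (auto simp: key_le_iff[symmetric])
  then show ?thesis using m by blast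
qed

lemma exists_min:
  assumes "finite S" "S \<noteq> {}"
  shows "\<exists>m\<in>S. \<forall>m'\<in>S. mle m m'"
proof -
  obtain m where m: "m \<in> S" "key m = Min (key ` S)"
    using assms by (metis (mono_tags, lifting) Min_in finite_imageI image_iff image_is_empty)
  have "\<forall>m'\<in>S. mle m m'" using m assms by (auto simp: key_le_iff[symmetric])
  then show ?thesis using m by blast
qed

definition supp :: "(nat \<times> nat \<Rightarrow> real) \<Rightarrow> (nat \<times> nat) set" where
  "supp c = {m. c m \<noteq> 0}"

definition LM :: "(nat \<times> nat \<Rightarrow> real) \<Rightarrow> nat \<times> nat" where
  "LM c = (THE m. c m \<noteq> 0 \<and> (\<forall>m'. c m' \<noteq> 0 \<longrightarrow> mle m' m))"

lemma LM:
  assumes "finite (supp c)" "supp c \<noteq> {}"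
  shows "c (LM c) \<noteq> 0" "\<And>m'. c m' \<noteq> 0 \<Longrightarrow> mle m' (LM c)"
proof -
  obtain m where m: "m \<in> supp c" "\<forall>m'\<in>supp c. mle m' m" using exists_max[OF assms] by blast
  have "c m \<noteq> 0 \<and> (\<forall>m'. c m' \<noteq> 0 \<longrightarrow> mle m' m)" using m by (auto simp: supp_def)
  moreover have "x = m" if "c x \<noteq> 0 \<and> (\<forall>m'. c m' \<noteq> 0 \<longrightarrow> mle m' x)" for x
  proof -
    have cm: "c m \<noteq> 0" using m by (simp add: supp_def)
    have "mle m x" using that cm by blast
    moreover have "mle x m" using that m unfolding supp_def by blast
    ultimately show ?thesis using mle_antisym by blast
  qed
  ultimately have "LM c = m" unfolding LM_def by (rule the_equality)
  then show "c (LM c) \<noteq> 0" "\<And>m'. c m' \<noteq> 0 \<Longrightarrow> mle m' (LM c)"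
    using m by (auto simp: supp_def)
qed

lemma LM_unique:
  assumes "c m \<noteq> 0" "\<And>m'. c m' \<noteq> 0 \<Longrightarrow> mle m' m"
  shows "LM c = m"
  unfolding LM_def
proof (rule the_equality)
  fix x assume x: "c x \<noteq> 0 \<and> (\<forall>m'. c m' \<noteq> 0 \<longrightarrow> mle m' x)"
  then have "mle m x" "mle x m" using assms by blast+
  then show "x = m" using mle_antisym by blast
qed (use assms in auto)

lemma mem_exps[simp]: "m \<in> exps k \<longleftrightarrow> mdeg m \<le> k"
  by (cases m) (auto simp: exps_def mdeg_def)

lemma finite_exps[simp]: "finite (exps k)"
proof -
  have "exps k \<subseteq> {..k} \<times> {..k}" by (auto simp: mdeg_def)
  then show ?thesis using finite_subset by blast
qed

definition NN :: "nat \<Rightarrow> nat" where "NN k = (k + 2) choose 2"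

lemma NN_twice: "2 * NN k = (k + 1) * (k + 2)"
  unfolding NN_def by (simp add: choose_two)

lemma NN_Suc: "NN (Suc k) = NN k + (k + 2)"
  using NN_twice[of k] NN_twice[of "Suc k"] by simp

definition lev :: "nat \<Rightarrow> (nat \<times> nat) set" where "lev n = {m. mdeg m = n}"

lemma lev_eq: "lev n = (\<lambda>i. (i, n - i)) ` {..n}"
  by (auto simp: lev_def mdeg_def image_iff)

lemma card_lev: "card (lev n) = n + 1"
proof -
  have "inj_on (\<lambda>i. (i, n - i)) {..n}" by (auto simp: inj_on_def)
  then show ?thesis by (simp add: lev_eq card_image)
qed

lemma card_exps: "card (exps k) = NN k"
proof (induction k)
  case 0
  have "exps 0 = {(0,0)}" by (auto simp: mdeg_def)
  then show ?case using NN_twice[of 0] by simp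
next
  case (Suc k)
  have "exps (Suc k) = exps k \<union> lev (Suc k)" by (auto simp: lev_def)
  moreover have "exps k \<inter> lev (Suc k) = {}" by (auto simp: lev_def)
  moreover have "finite (lev (Suc k))" by (simp add: lev_eq)
  ultimately have "card (exps (Suc k)) = card (exps k) + card (lev (Suc k))"
    by (simp add: card_Un_disjoint)
  then show ?case using Suc card_lev NN_Suc by simp
qed

definition monom :: "real \<times> real \<Rightarrow> nat \<times> nat \<Rightarrow> real" where
  "monom p m = fst p ^ fst m * snd p ^ snd m"

lemma monom_madd: "monom p (madd m s) = monom p m * monom p s"
  by (simp add: monom_def madd_def power_add)

lemma poly2_eval_alt: "poly2_eval k c p = (\<Sum>m\<in>exps k. c m * monom p m)"
  unfolding poly2_eval_def
proof (rule sum.cong[OF refl])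
  fix x :: "nat \<times> nat"
  show "(case x of (i, j) \<Rightarrow> c (i, j) * fst p ^ i * snd p ^ j) = c x * monom p x"
    by (cases x) (simp add: monom_def)
qed

definition bnd :: "nat \<Rightarrow> (nat \<times> nat \<Rightarrow> real) \<Rightarrow> bool" where
  "bnd k c \<longleftrightarrow> (\<forall>m. c m \<noteq> 0 \<longrightarrow> mdeg m \<le> k)"

lemma bnd_supp: "bnd k c \<Longrightarrow> supp c \<subseteq> exps k"
  by (auto simp: bnd_def supp_def)

lemma bnd_finite: "bnd k c \<Longrightarrow> finite (supp c)"
  by (rule finite_subset[OF bnd_supp]) simp_all

lemma bnd_mono: "bnd k c \<Longrightarrow> k \<le> k' \<Longrightarrow> bnd k' c"
  by (auto simp: bnd_def)

lemma eval_bnd: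
  assumes "bnd k c" "k \<le> k'"
  shows "poly2_eval k' c p = poly2_eval k c p"
  unfolding poly2_eval_alt
proof -
  have "\<forall>i\<in>exps k' - exps k. c i * monom p i = 0"
    using assms unfolding bnd_def by (metis DiffE mem_exps mult_eq_0_iff)
  moreover have "exps k \<subseteq> exps k'" using assms(2) by auto
  ultimately show "(\<Sum>m\<in>exps k'. c m * monom p m) = (\<Sum>m\<in>exps k. c m * monom p m)"
    by (intro sum.mono_neutral_right) auto
qed

definition Z :: "nat \<Rightarrow> (real \<times> real) set \<Rightarrow> (nat \<times> nat \<Rightarrow> real) set" where
  "Z k S = {c. bnd k c \<and> (\<forall>p\<in>S. poly2_eval k c p = 0)}"

definition lms :: "nat \<Rightarrow> (real \<times> real) set \<Rightarrow> (nat \<times> nat) set" where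
  "lms k S = LM ` {c\<in>Z k S. supp c \<noteq> {}}"

lemma lms_sub: "lms k S \<subseteq> exps k"
proof
  fix m assume "m \<in> lms k S"
  then obtain c where c: "c \<in> Z k S" "supp c \<noteq> {}" "m = LM c" by (auto simp: lms_def)
  then have "c m \<noteq> 0" using LM(1)[OF bnd_finite] by (auto simp: Z_def)
  then show "m \<in> exps k" using c by (auto simp: Z_def bnd_def)
qed

lemma finite_lms: "finite (lms k S)"
  by (rule finite_subset[OF lms_sub]) simp

lemma LM_bnd:
  assumes "bnd k c" "supp c \<noteq> {}"
  shows "bnd (mdeg (LM c)) c"
  using LM(2)[OF bnd_finite[OF assms(1)] assms(2)] by (auto simp: bnd_def dest: mle_deg)

declare split_paired_All[simp del] split_paired_Ex[simp del]

definition cle :: "nat \<times> nat \<Rightarrow> nat \<times> nat \<Rightarrow> bool" where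
  "cle s m \<longleftrightarrow> fst s \<le> fst m \<and> snd s \<le> snd m"
definition msub :: "nat \<times> nat \<Rightarrow> nat \<times> nat \<Rightarrow> nat \<times> nat" where
  "msub m s = (fst m - fst s, snd m - snd s)"
definition shift :: "nat \<times> nat \<Rightarrow> (nat \<times> nat \<Rightarrow> real) \<Rightarrow> (nat \<times> nat \<Rightarrow> real)" where
  "shift s z = (\<lambda>m. if cle s m then z (msub m s) else 0)"

lemma madd_msub: "cle s m \<Longrightarrow> madd (msub m s) s = m"
  by (cases m; cases s) (auto simp: cle_def madd_def msub_def)
lemma msub_madd[simp]: "msub (madd m s) s = m"
  by (cases m; cases s) (auto simp: madd_def msub_def)
lemma cle_madd[simp]: "cle s (madd m s)"
  by (auto simp: cle_def madd_def)
lemma madd_comm: "madd a b = madd b a"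
  by (auto simp: madd_def)
lemma mdeg_msub: "cle s m \<Longrightarrow> mdeg (msub m s) = mdeg m - mdeg s"
  by (auto simp: cle_def msub_def mdeg_def)

lemma shift_madd[simp]: "shift s z (madd m s) = z m"
  by (simp add: shift_def)

lemma shift_bnd: "bnd k z \<Longrightarrow> bnd (k + mdeg s) (shift s z)"
  unfolding bnd_def shift_def
  by (metis add_le_cancel_right madd_msub mdeg_madd)

lemma shift_eval:
  assumes "bnd k z"
  shows "poly2_eval (k + mdeg s) (shift s z) p = monom p s * poly2_eval k z p"
proof -
  have inj: "inj_on (\<lambda>m. madd m s) (exps k)"
    by (intro inj_onI) (metis msub_madd)
  have "monom p s * poly2_eval k z p = (\<Sum>m\<in>exps k. shift s z (madd m s) * monom p (madd m s))"
    unfolding poly2_eval_alt by (simp add: sum_distrib_left monom_madd mult_ac)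
  also have "\<dots> = (\<Sum>m'\<in>(\<lambda>m. madd m s) ` exps k. shift s z m' * monom p m')"
    using inj by (simp add: sum.reindex)
  also have "\<dots> = (\<Sum>m'\<in>exps (k + mdeg s). shift s z m' * monom p m')"
  proof (rule sum.mono_neutral_left)
    show "(\<lambda>m. madd m s) ` exps k \<subseteq> exps (k + mdeg s)" by auto
    show "\<forall>i\<in>exps (k + mdeg s) - (\<lambda>m. madd m s) ` exps k. shift s z i * monom p i = 0"
    proof
      fix i assume i: "i \<in> exps (k + mdeg s) - (\<lambda>m. madd m s) ` exps k"
      show "shift s z i * monom p i = 0"
      proof (rule ccontr)
        assume "shift s z i * monom p i \<noteq> 0"
        then have c: "cle s i" "z (msub i s) \<noteq> 0" by (auto simp: shift_def split: if_splits)
        then have "mdeg (msub i s) \<le> k" using assms by (auto simp: bnd_def)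
        then have "i \<in> (\<lambda>m. madd m s) ` exps k" using madd_msub[OF c(1)] by force
        then show False using i by blast
      qed
    qed
  qed simp
  finally show ?thesis unfolding poly2_eval_alt by simp
qed

lemma shift_LM:
  assumes "bnd k z" "supp z \<noteq> {}"
  shows "LM (shift s z) = madd (LM z) s" "supp (shift s z) \<noteq> {}"
proof -
  have fz: "finite (supp z)" using bnd_finite[OF assms(1)] .
  have "shift s z (madd (LM z) s) \<noteq> 0" using LM(1)[OF fz assms(2)] by simp
  moreover have "mle m' (madd (LM z) s)" if "shift s z m' \<noteq> 0" for m'
  proof -
    have c: "cle s m'" "z (msub m' s) \<noteq> 0" using that by (auto simp: shift_def split: if_splits)
    have "mle (msub m' s) (LM z)" using LM(2)[OF fz assms(2) c(2)] .
    then have "mle (madd (msub m' s) s) (madd (LM z) s)" by (rule mle_madd) simp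
    then show ?thesis using madd_msub[OF c(1)] by simp
  qed
  ultimately show "LM (shift s z) = madd (LM z) s" by (rule LM_unique)
  show "supp (shift s z) \<noteq> {}" using \<open>shift s z (madd (LM z) s) \<noteq> 0\<close> unfolding supp_def by blast
qed

lemma shift_Z:
  assumes "z \<in> Z k S" "supp z \<noteq> {}" "mdeg (LM z) + mdeg s \<le> k'"
  shows "shift s z \<in> Z k' S"
proof -
  have bz: "bnd k z" using assms(1) by (simp add: Z_def)
  have b0: "bnd (mdeg (LM z)) z" using LM_bnd[OF bz assms(2)] .
  have b1: "bnd (mdeg (LM z) + mdeg s) (shift s z)" using shift_bnd[OF b0] .
  have "poly2_eval k' (shift s z) p = 0" if "p \<in> S" for p
  proof -
    have "poly2_eval k' (shift s z) p = poly2_eval (mdeg (LM z) + mdeg s) (shift s z) p"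
      using eval_bnd[OF b1 assms(3)] .
    also have "\<dots> = monom p s * poly2_eval (mdeg (LM z)) z p" using shift_eval[OF b0] .
    also have "poly2_eval (mdeg (LM z)) z p = poly2_eval k z p"
      using eval_bnd[OF b0, of k] bz LM_bnd lms_sub assms
      by (metis LM(1) bnd_def bnd_finite)
    finally show ?thesis using assms(1) that by (simp add: Z_def)
  qed
  then show ?thesis using bnd_mono[OF b1 assms(3)] by (simp add: Z_def)
qed

lemma lms_up:
  assumes "x \<in> lms k S" "cle x t" "mdeg t \<le> k'"
  shows "t \<in> lms k' S"
proof -
  obtain z where z: "z \<in> Z k S" "supp z \<noteq> {}" "x = LM z" using assms(1) by (auto simp: lms_def)
  have bz: "bnd k z" using z by (simp add: Z_def)
  have "mdeg (LM z) + mdeg (msub t x) \<le> k'"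
    using assms(2,3) z(3) mdeg_msub[OF assms(2)] by (auto simp: cle_def mdeg_def)
  then have "shift (msub t x) z \<in> Z k' S" using shift_Z[OF z(1,2)] by blast
  moreover have "LM (shift (msub t x) z) = t" "supp (shift (msub t x) z) \<noteq> {}"
    using shift_LM[OF bz z(2)] z(3) madd_msub[OF assms(2)] madd_comm by metis+
  ultimately show ?thesis unfolding lms_def by (metis (mono_tags, lifting) image_eqI mem_Collect_eq)
qed

definition prodp :: "nat \<Rightarrow> (nat \<times> nat \<Rightarrow> real) \<Rightarrow> (nat \<times> nat \<Rightarrow> real) \<Rightarrow> (nat \<times> nat \<Rightarrow> real)" where
  "prodp kw w z = (\<lambda>m. \<Sum>s\<in>exps kw. w s * shift s z m)"

lemma prodp_bnd:
  assumes "bnd kz z"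
  shows "bnd (kz + kw) (prodp kw w z)"
  unfolding bnd_def
proof (intro allI impI)
  fix m assume "prodp kw w z m \<noteq> 0"
  then obtain s where s: "s \<in> exps kw" "shift s z m \<noteq> 0" unfolding prodp_def
    by (metis (no_types, lifting) mult_zero_right sum.neutral)
  have "bnd (kz + mdeg s) (shift s z)" using shift_bnd[OF assms] .
  then show "mdeg m \<le> kz + kw" using s by (auto simp: bnd_def)
qed

lemma prodp_eval:
  assumes "bnd kz z" "bnd kw w"
  shows "poly2_eval (kz + kw) (prodp kw w z) p = poly2_eval kw w p * poly2_eval kz z p"
proof -
  have "poly2_eval (kz + kw) (prodp kw w z) p
      = (\<Sum>m\<in>exps (kz + kw). \<Sum>s\<in>exps kw. w s * (shift s z m * monom p m))"
    unfolding poly2_eval_alt prodp_def by (simp add: sum_distrib_right sum_distrib_left mult_ac)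
  also have "\<dots> = (\<Sum>s\<in>exps kw. w s * (\<Sum>m\<in>exps (kz + kw). shift s z m * monom p m))"
    by (subst sum.swap) (simp add: sum_distrib_left)
  also have "\<dots> = (\<Sum>s\<in>exps kw. w s * (monom p s * poly2_eval kz z p))"
  proof (rule sum.cong[OF refl])
    fix s assume s: "s \<in> exps kw"
    have "(\<Sum>m\<in>exps (kz + kw). shift s z m * monom p m) = poly2_eval (kz + kw) (shift s z) p"
      by (simp add: poly2_eval_alt)
    also have "\<dots> = poly2_eval (kz + mdeg s) (shift s z) p"
      using eval_bnd[OF shift_bnd[OF assms(1)], of s "kz + kw"] s by simp
    also have "\<dots> = monom p s * poly2_eval kz z p" using shift_eval[OF assms(1)] .
    finally show "w s * (\<Sum>m\<in>exps (kz + kw). shift s z m * monom p m) = w s * (monom p s * poly2_eval kz z p)"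
      by simp
  qed
  also have "\<dots> = poly2_eval kw w p * poly2_eval kz z p"
    unfolding poly2_eval_alt by (simp add: sum_distrib_right mult_ac)
  finally show ?thesis .
qed

lemma prodp_nonzero:
  assumes "bnd kz z" "bnd kw w" "supp z \<noteq> {}" "supp w \<noteq> {}"
  shows "prodp kw w z (madd (LM z) (LM w)) \<noteq> 0"
proof -
  have fz: "finite (supp z)" and fw: "finite (supp w)" using bnd_finite assms by blast+
  let ?t = "madd (LM z) (LM w)"
  have lw: "LM w \<in> exps kw" using LM(1)[OF fw assms(4)] assms(2) by (auto simp: bnd_def)
  have zero: "w s * shift s z ?t = 0" if "s \<in> exps kw - {LM w}" for s
  proof (rule ccontr)
    assume "w s * shift s z ?t \<noteq> 0"
    then have ws: "w s \<noteq> 0" and c: "cle s ?t" "z (msub ?t s) \<noteq> 0"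
      by (auto simp: shift_def split: if_splits)
    have "mle s (LM w)" using LM(2)[OF fw assms(4) ws] .
    moreover have "s \<noteq> LM w" using that by simp
    moreover have "mle (msub ?t s) (LM z)" using LM(2)[OF fz assms(3) c(2)] .
    ultimately have "madd s (msub ?t s) \<noteq> madd (LM w) (LM z)" by (rule mless_madd)
    moreover have "madd s (msub ?t s) = ?t" using madd_msub[OF c(1)] madd_comm by metis
    ultimately show False using madd_comm by metis
  qed
  have "prodp kw w z ?t = w (LM w) * shift (LM w) z ?t + (\<Sum>s\<in>exps kw - {LM w}. w s * shift s z ?t)"
    unfolding prodp_def using lw by (simp add: sum.remove)
  also have "(\<Sum>s\<in>exps kw - {LM w}. w s * shift s z ?t) = 0" by (rule sum.neutral) (use zero in blast)
  also have "shift (LM w) z ?t = z (LM z)" using shift_madd[of "LM w" z "LM z"] by simp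
  finally show ?thesis using LM(1)[OF fz assms(3)] LM(1)[OF fw assms(4)] by simp
qed

lemma domain_Z:
  assumes "z \<in> Z k1 S1" "w \<in> Z k2 S2" "supp z \<noteq> {}" "supp w \<noteq> {}"
  shows "\<exists>c\<in>Z (k1 + k2) (S1 \<union> S2). supp c \<noteq> {}"
proof -
  have bz: "bnd k1 z" and bw: "bnd k2 w" using assms by (auto simp: Z_def)
  have "prodp k2 w z \<in> Z (k1 + k2) (S1 \<union> S2)"
    using prodp_bnd[OF bz] prodp_eval[OF bz bw] assms(1,2) by (auto simp: Z_def)
  moreover have "supp (prodp k2 w z) \<noteq> {}"
    using prodp_nonzero[OF bz bw assms(3,4)] unfolding supp_def by blast
  ultimately show ?thesis by blast
qed

definition phi :: "nat \<Rightarrow> real \<times> real \<Rightarrow> nat \<times> nat \<Rightarrow> real" where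
  "phi k p m = (if mdeg m \<le> k then monom p m else 0)"

definition indepP :: "nat \<Rightarrow> (real \<times> real) set \<Rightarrow> bool" where
  "indepP k M \<longleftrightarrow> finite M \<and>
     (\<forall>u. (\<forall>m. (\<Sum>p\<in>M. u p * phi k p m) = 0) \<longrightarrow> (\<forall>p\<in>M. u p = 0))"

lemma eval_phi: "poly2_eval k c p = (\<Sum>m\<in>exps k. c m * phi k p m)"
  unfolding poly2_eval_alt phi_def by (intro sum.cong) auto

lemma indepP_empty: "indepP k {}" by (simp add: indepP_def)

lemma indepP_subset:
  assumes "indepP k M" "M' \<subseteq> M"
  shows "indepP k M'"
  unfolding indepP_def
proof (intro conjI allI impI)
  show "finite M'" using assms finite_subset by (auto simp: indepP_def)
  fix u assume h: "\<forall>m. (\<Sum>p\<in>M'. u p * phi k p m) = 0"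
  define u' where "u' = (\<lambda>p. if p \<in> M' then u p else 0)"
  have "(\<Sum>p\<in>M. u' p * phi k p m) = (\<Sum>p\<in>M'. u p * phi k p m)" for m
  proof -
    have "(\<Sum>p\<in>M. u' p * phi k p m) = (\<Sum>p\<in>M'. u' p * phi k p m)"
      using assms by (intro sum.mono_neutral_right) (auto simp: u'_def indepP_def)
    then show ?thesis by (simp add: u'_def)
  qed
  then have "\<forall>p\<in>M. u' p = 0" using assms(1) h unfolding indepP_def by metis
  then show "\<forall>p\<in>M'. u p = 0" using assms(2) unfolding u'_def by (metis subsetD)
qed

lemma indepP_mono:
  assumes "indepP f M" "f \<le> k"
  shows "indepP k M"
  unfolding indepP_def
proof (intro conjI allI impI)
  show "finite M" using assms by (simp add: indepP_def)
  fix u assume h: "\<forall>m. (\<Sum>p\<in>M. u p * phi k p m) = 0"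
  have "(\<Sum>p\<in>M. u p * phi f p m) = 0" for m
  proof (cases "mdeg m \<le> f")
    case True
    then have "phi f p m = phi k p m" for p using assms(2) by (simp add: phi_def)
    then show ?thesis using h by simp
  next
    case False then show ?thesis by (simp add: phi_def)
  qed
  then show "\<forall>p\<in>M. u p = 0" using assms(1) by (auto simp: indepP_def)
qed

declare split_paired_All[simp del] split_paired_Ex[simp del]

lemma card_exps_diff_lms: "card (exps k - lms k S) = NN k - card (lms k S)"
  using lms_sub[of k S] by (simp add: card_Diff_subset finite_lms card_exps)

lemma D1:
  assumes "finite D"
  shows "\<exists>M\<subseteq>D. indepP e M \<and> NN e \<le> card M + card (lms e D)"
proof -
  let ?C = "{card M | M. M \<subseteq> D \<and> indepP e M}"
  have fC: "finite ?C"
  proof (rule finite_subset)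
    show "?C \<subseteq> {..card D}" using assms by (auto intro: card_mono)
  qed simp
  have "0 \<in> ?C" using indepP_empty by force
  then have "Max ?C \<in> ?C" using fC Max_in by blast
  then obtain M where M: "M \<subseteq> D" "indepP e M" "card M = Max ?C" by auto
  have fM: "finite M" using M(2) by (simp add: indepP_def)
  have notind: "\<not> indepP e (insert p M)" if "p \<in> D" "p \<notin> M" for p
  proof
    assume "indepP e (insert p M)"
    then have "card (insert p M) \<in> ?C" using that M(1) by blast
    then have "card (insert p M) \<le> Max ?C" using fC by simp
    then show False using M(3) fM that by simp
  qed
  show ?thesis
  proof (rule ccontr)
    assume "\<not> ?thesis"
    then have lt: "card M + card (lms e D) < NN e" using M by force
    define J where "J = exps e - lms e D"
    have cJ: "card M < card J" using lt card_exps_diff_lms[of e D] by (simp add: J_def)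
    obtain c where c: "\<exists>m\<in>J. c m \<noteq> 0" "\<forall>q\<in>M. (\<Sum>m\<in>J. c m * phi e q m) = 0"
      using G_lemma[of M J "\<lambda>m q. phi e q m"] fM cJ by (auto simp: J_def)
    define c' where "c' = (\<lambda>m. if m \<in> J then c m else 0)"
    have X0: "(\<Sum>m\<in>J. c m * phi e p m) = 0" if p: "p \<in> D" for p
    proof (cases "p \<in> M")
      case True then show ?thesis using c by simp
    next
      case False
      have fin: "finite (insert p M)" using fM by simp
      from notind[OF p False] fin obtain u where
        u: "\<forall>m. (\<Sum>q\<in>insert p M. u q * phi e q m) = 0" "\<exists>q\<in>insert p M. u q \<noteq> 0"
        unfolding indepP_def by blast
      have up: "u p \<noteq> 0"
      proof
        assume up0: "u p = 0"
        have "\<forall>m. (\<Sum>q\<in>M. u q * phi e q m) = 0" using u(1) up0 False fM by simp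
        then have "\<forall>q\<in>M. u q = 0" using M(2) unfolding indepP_def by blast
        then show False using u(2) up0 by blast
      qed
      have "0 = (\<Sum>m\<in>J. c m * (\<Sum>q\<in>insert p M. u q * phi e q m))" using u(1) by simp
      also have "\<dots> = (\<Sum>q\<in>insert p M. u q * (\<Sum>m\<in>J. c m * phi e q m))"
        by (simp add: sum_distrib_left sum_distrib_right mult_ac) (rule sum.swap)
      also have "\<dots> = u p * (\<Sum>m\<in>J. c m * phi e p m)" using c(2) False fM by simp
      finally show ?thesis using up by simp
    qed
    have Jsub: "J \<subseteq> exps e" by (auto simp: J_def)
    have ev: "poly2_eval e c' p = (\<Sum>m\<in>J. c m * phi e p m)" for p
    proof -
      have "poly2_eval e c' p = (\<Sum>m\<in>exps e. c' m * phi e p m)" by (rule eval_phi)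
      also have "\<dots> = (\<Sum>m\<in>J. c' m * phi e p m)"
        using Jsub by (intro sum.mono_neutral_right) (auto simp: c'_def)
      also have "\<dots> = (\<Sum>m\<in>J. c m * phi e p m)" by (simp add: c'_def)
      finally show ?thesis .
    qed
    have bc: "bnd e c'" using Jsub unfolding bnd_def c'_def by (metis mem_exps subsetD)
    have inZ: "c' \<in> Z e D" using bc ev X0 by (simp add: Z_def)
    have sc: "supp c' \<noteq> {}" using c(1) unfolding supp_def c'_def by (metis (mono_tags, lifting) empty_Collect_eq)
    have "LM c' \<in> lms e D" using inZ sc unfolding lms_def by blast
    moreover have "c' (LM c') \<noteq> 0" using LM(1)[OF bnd_finite[OF bc] sc] .
    then have "LM c' \<in> J" by (auto simp: c'_def split: if_splits)
    ultimately show False by (simp add: J_def)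
  qed
qed

lemma D2:
  assumes "indepP k S"
  shows "card S + card (lms k S) \<le> NN k"
proof (rule ccontr)
  assume "\<not> ?thesis"
  moreover have "card (lms k S) \<le> NN k"
    using card_mono[OF finite_exps lms_sub[of k S]] by (simp add: card_exps)
  ultimately have lt: "card (exps k - lms k S) < card S" using card_exps_diff_lms[of k S] by linarith
  have fS: "finite S" using assms by (simp add: indepP_def)
  obtain u where u: "\<exists>q\<in>S. u q \<noteq> 0" "\<forall>m\<in>exps k - lms k S. (\<Sum>q\<in>S. u q * phi k q m) = 0"
    using G_lemma[of "exps k - lms k S" S "\<lambda>q m. phi k q m"] fS lt by auto
  define w where "w = (\<lambda>m. \<Sum>q\<in>S. u q * phi k q m)"
  have sw: "supp w \<noteq> {}"
  proof
    assume "supp w = {}"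
    then have "\<forall>m. (\<Sum>q\<in>S. u q * phi k q m) = 0" unfolding supp_def w_def by blast
    then show False using assms u(1) unfolding indepP_def by blast
  qed
  have swl: "supp w \<subseteq> lms k S"
  proof
    fix m assume m: "m \<in> supp w"
    have "mdeg m \<le> k"
    proof (rule ccontr)
      assume "\<not> mdeg m \<le> k"
      then have "w m = 0" by (simp add: w_def phi_def)
      then show False using m by (simp add: supp_def)
    qed
    then show "m \<in> lms k S" using u(2) m unfolding supp_def w_def by auto
  qed
  have fw: "finite (supp w)" using swl finite_lms finite_subset by blast
  obtain m0 where m0: "m0 \<in> supp w" "\<forall>m'\<in>supp w. mle m0 m'" using exists_min[OF fw sw] by blast
  obtain z where z: "z \<in> Z k S" "supp z \<noteq> {}" "LM z = m0"
    using swl m0(1) unfolding lms_def by blast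
  have bz: "bnd k z" using z by (simp add: Z_def)
  have fz: "finite (supp z)" using bnd_finite[OF bz] .
  have m0k: "m0 \<in> exps k" using swl m0(1) lms_sub by blast
  have "(\<Sum>m\<in>exps k. z m * w m) = (\<Sum>q\<in>S. u q * poly2_eval k z q)"
    unfolding w_def eval_phi by (simp add: sum_distrib_left sum_distrib_right mult_ac) (rule sum.swap)
  also have "\<dots> = 0" using z(1) by (simp add: Z_def)
  finally have s0: "(\<Sum>m\<in>exps k. z m * w m) = 0" .
  have "(\<Sum>m\<in>exps k. z m * w m) = z m0 * w m0 + (\<Sum>m\<in>exps k - {m0}. z m * w m)"
    using m0k by (simp add: sum.remove)
  also have "(\<Sum>m\<in>exps k - {m0}. z m * w m) = 0"
  proof (rule sum.neutral, rule ballI)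
    fix m assume m: "m \<in> exps k - {m0}"
    show "z m * w m = 0"
    proof (rule ccontr)
      assume "z m * w m \<noteq> 0"
      then have "z m \<noteq> 0" "w m \<noteq> 0" by auto
      then have "mle m m0" "mle m0 m" using LM(2)[OF fz z(2)] z(3) m0(2) by (auto simp: supp_def)
      then show False using m mle_antisym by blast
    qed
  qed
  finally have "z m0 * w m0 = 0" using s0 by simp
  moreover have "z m0 \<noteq> 0" using LM(1)[OF fz z(2)] z(3) by simp
  moreover have "w m0 \<noteq> 0" using m0(1) by (simp add: supp_def)
  ultimately show False by simp
qed

declare split_paired_All[simp del] split_paired_Ex[simp del]

lemma NN_tri: "NN j = tri j + j + 1"
proof -
  have "2 * tri j = j * (j + 1)" by (induction j) (auto simp: algebra_simps)
  then show ?thesis using NN_twice[of j] by (simp add: algebra_simps)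
qed

lemma K0:
  assumes "x \<in> X" "mdeg x \<le> e" "\<forall>x\<in>X. \<forall>t. cle x t \<and> mdeg t \<le> e \<longrightarrow> t \<in> X"
  shows "{x\<in>X. mdeg x = e} \<noteq> {}"
proof -
  let ?t = "(fst x + (e - mdeg x), snd x)"
  have "cle x ?t" "mdeg ?t = e" using assms(2) by (auto simp: cle_def mdeg_def)
  moreover have "?t \<in> X" using assms(3)[rule_format, OF assms(1)] \<open>cle x ?t\<close> \<open>mdeg ?t = e\<close> by simp
  ultimately show ?thesis by blast
qed

lemma top_card: "card {x\<in>X. mdeg x = e} \<le> e + 1"
proof -
  have "{x\<in>X. mdeg x = e} \<subseteq> lev e" by (auto simp: lev_def)
  then show ?thesis using card_mono[of "lev e"] card_lev[of e] by (simp add: lev_eq)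
qed

lemma K1:
  assumes "finite X" "\<forall>x\<in>X. h < mdeg x \<and> mdeg x \<le> e"
    "\<forall>x\<in>X. \<forall>t. cle x t \<and> mdeg t \<le> e \<longrightarrow> t \<in> X"
  shows "card X \<le> (e - h) * card {x\<in>X. mdeg x = e}"
proof -
  let ?top = "{x\<in>X. mdeg x = e}"
  have lev_le: "card {x\<in>X. mdeg x = l} \<le> card ?top" if "l \<le> e" for l
  proof -
    define g where "g = (\<lambda>x::nat\<times>nat. (fst x + (e - l), snd x))"
    have "inj_on g {x\<in>X. mdeg x = l}"
      by (rule inj_onI) (simp add: g_def prod_eq_iff)
    moreover have "g ` {x\<in>X. mdeg x = l} \<subseteq> ?top"
    proof
      fix y assume "y \<in> g ` {x\<in>X. mdeg x = l}"
      then obtain x where x: "x \<in> X" "mdeg x = l" "y = g x" by blast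
      have 1: "cle x y" unfolding x(3) g_def cle_def by simp
      have 2: "mdeg y = e" using x that unfolding g_def mdeg_def by simp
      have "y \<in> X" using assms(3) x(1) 1 2 by simp
      then show "y \<in> ?top" using 2 by simp
    qed
    moreover have "finite ?top" using assms(1) by simp
    ultimately have "card (g ` {x\<in>X. mdeg x = l}) \<le> card ?top" by (intro card_mono)
    then show ?thesis using card_image[OF \<open>inj_on g {x\<in>X. mdeg x = l}\<close>] by simp
  qed
  have "X = (\<Union>l\<in>{h<..e}. {x\<in>X. mdeg x = l})"
  proof
    show "X \<subseteq> (\<Union>l\<in>{h<..e}. {x\<in>X. mdeg x = l})"
    proof
      fix x assume "x \<in> X"
      then have "mdeg x \<in> {h<..e}" using assms(2) by simp
      then show "x \<in> (\<Union>l\<in>{h<..e}. {x\<in>X. mdeg x = l})" using \<open>x \<in> X\<close> by blast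
    qed
  qed blast
  then have "card X \<le> (\<Sum>l\<in>{h<..e}. card {x\<in>X. mdeg x = l})"
    using card_UN_le[of "{h<..e}" "\<lambda>l. {x\<in>X. mdeg x = l}"] by simp
  also have "\<dots> \<le> (\<Sum>l\<in>{h<..e}. card ?top)" by (intro sum_mono lev_le) simp
  also have "\<dots> = (e - h) * card ?top" by simp
  finally show ?thesis .
qed

lemma K2:
  assumes "finite Xf" "X \<subseteq> Xf" "\<forall>x\<in>X. mdeg x \<le> e"
    "\<forall>x\<in>X. \<forall>t. cle x t \<and> mdeg t \<le> e + j \<longrightarrow> t \<in> Xf"
    "{x\<in>X. mdeg x = e} \<noteq> {}"
  shows "card X + j * card {x\<in>X. mdeg x = e} + tri j \<le> card Xf"
proof -
  define top where "top = {x\<in>X. mdeg x = e}"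
  have fX: "finite X" using assms(1,2) by (rule finite_subset[rotated])
  have ftop: "finite top" using fX unfolding top_def by simp
  have tne: "top \<noteq> {}" using assms(5) unfolding top_def .
  have fm: "finite (fst ` top)" "fst ` top \<noteq> {}" using ftop tne by simp_all
  have "Min (fst ` top) \<in> fst ` top" using Min_in[OF fm] .
  then obtain xs where xs0: "xs \<in> top" "fst xs = Min (fst ` top)" by (metis imageE)
  have xs: "xs \<in> top" "\<forall>x\<in>top. fst xs \<le> fst x"
    using xs0 Min_le[OF fm(1)] by simp_all
  define S2 where "S2 = (\<lambda>s. madd xs s) ` (exps j - {(0,0)})"
  define g where "g = (\<lambda>(x::nat\<times>nat, t::nat). (fst x + t, snd x))"
  define S3 where "S3 = g ` ((top - {xs}) \<times> {1..j})"
  have xsX: "xs \<in> X" "mdeg xs = e" using xs(1) by (simp_all add: top_def)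
  have "inj_on (\<lambda>s. madd xs s) (exps j - {(0,0)})"
    by (rule inj_onI) (simp add: madd_def prod_eq_iff)
  then have cS2: "card S2 = NN j - 1"
    unfolding S2_def by (simp add: card_image card_Diff_singleton card_exps mdeg_def)
  have "inj_on g ((top - {xs}) \<times> {1..j})"
  proof (rule inj_onI)
    fix a b assume a: "a \<in> (top - {xs}) \<times> {1..j}" and b: "b \<in> (top - {xs}) \<times> {1..j}" and ab: "g a = g b"
    obtain x t where aa: "a = (x, t)" by (cases a)
    obtain x' t' where bb: "b = (x', t')" by (cases b)
    have m: "mdeg x = e" "mdeg x' = e" using a b aa bb by (simp_all add: top_def)
    have s: "snd x = snd x'" "fst x + t = fst x' + t'" using ab aa bb by (simp_all add: g_def)
    have "fst x = fst x'" using m s(1) unfolding mdeg_def by simp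
    then have "x = x'" using s(1) by (simp add: prod_eq_iff)
    then show "a = b" using aa bb s(2) by simp
  qed
  then have cS3: "card S3 = (card top - 1) * j"
    unfolding S3_def using xs(1) ftop by (simp add: card_image card_cartesian_product card_Diff_singleton)
  have S2sub: "S2 \<subseteq> Xf"
  proof
    fix y assume "y \<in> S2"
    then obtain s where s: "s \<in> exps j" "y = madd xs s" unfolding S2_def by blast
    have 1: "cle xs y" using s(2) by (simp add: cle_def madd_def)
    have 2: "mdeg y \<le> e + j" using s xsX by simp
    show "y \<in> Xf" using assms(4) xsX(1) 1 2 by simp
  qed
  have S3sub: "S3 \<subseteq> Xf"
  proof
    fix y assume "y \<in> S3"
    then obtain x t where xt: "x \<in> top" "t \<in> {1..j}" "y = (fst x + t, snd x)"
      unfolding S3_def g_def by force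
    have x: "x \<in> X" "mdeg x = e" using xt by (simp_all add: top_def)
    have 1: "cle x y" using xt by (simp add: cle_def)
    have 2: "mdeg y \<le> e + j" using xt x unfolding mdeg_def by simp
    show "y \<in> Xf" using assms(4) x(1) 1 2 by simp
  qed
  have gtS2: "mdeg y > e" if yS: "y \<in> S2" for y
  proof -
    obtain s where s: "s \<in> exps j - {(0,0)}" "y = madd xs s" using yS unfolding S2_def by blast
    have "mdeg s > 0" using s(1) by (cases s) (simp add: mdeg_def)
    then show ?thesis using s xsX by simp
  qed
  have gtS3: "mdeg y > e" if yS: "y \<in> S3" for y
  proof -
    obtain x t where xt: "x \<in> top" "t \<in> {1..j}" "y = (fst x + t, snd x)"
      using yS unfolding S3_def g_def by force
    have "mdeg x = e" using xt by (simp add: top_def)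
    then show ?thesis using xt unfolding mdeg_def by simp
  qed
  have d12: "X \<inter> S2 = {}"
  proof -
    have "False" if "y \<in> X" "y \<in> S2" for y using assms(3) that gtS2 by (meson not_le)
    then show ?thesis by blast
  qed
  have d13: "X \<inter> S3 = {}"
  proof -
    have "False" if "y \<in> X" "y \<in> S3" for y using assms(3) that gtS3 by (meson not_le)
    then show ?thesis by blast
  qed
  have ge2: "snd y \<ge> snd xs" if yS: "y \<in> S2" for y
  proof -
    obtain s where "y = madd xs s" using yS unfolding S2_def by blast
    then show ?thesis by (simp add: madd_def)
  qed
  have lt3: "snd y < snd xs" if yS: "y \<in> S3" for y
  proof -
    obtain x t where xt: "x \<in> top" "x \<noteq> xs" "y = (fst x + t, snd x)"
      using yS unfolding S3_def g_def by force
    have me: "mdeg x = e" using xt by (simp add: top_def)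
    have le: "fst xs \<le> fst x" using xs(2) xt(1) by blast
    have "fst xs \<noteq> fst x"
    proof
      assume h: "fst xs = fst x"
      then have "snd xs = snd x" using me xsX(2) unfolding mdeg_def by simp
      then have "x = xs" using h by (simp add: prod_eq_iff)
      then show False using xt(2) by simp
    qed
    then show ?thesis using le me xsX(2) xt(3) unfolding mdeg_def by simp
  qed
  have d23: "S2 \<inter> S3 = {}"
  proof -
    have "False" if "y \<in> S2" "y \<in> S3" for y using ge2[OF that(1)] lt3[OF that(2)] by simp
    then show ?thesis by blast
  qed
  have fS2: "finite S2" "finite S3" using S2sub S3sub assms(1) finite_subset by auto
  have cu: "card (X \<union> S2 \<union> S3) = card X + card S2 + card S3"
  proof -
    have "card (X \<union> S2) = card X + card S2" using d12 fX fS2 by (simp add: card_Un_disjoint)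
    moreover have "(X \<union> S2) \<inter> S3 = {}" using d13 d23 by blast
    ultimately show ?thesis using fX fS2 by (simp add: card_Un_disjoint)
  qed
  have "X \<union> S2 \<union> S3 \<subseteq> Xf" using assms(2) S2sub S3sub by blast
  then have "card (X \<union> S2 \<union> S3) \<le> card Xf" by (rule card_mono[OF assms(1)])
  moreover have "card top \<ge> 1" using ftop tne by (simp add: Suc_le_eq card_gt_0_iff)
  moreover have "NN j - 1 + (card top - 1) * j = j * card top + tri j"
    using NN_tri[of j] \<open>card top \<ge> 1\<close> by (cases "card top") (auto simp: algebra_simps)
  ultimately show ?thesis using cS2 cS3 cu unfolding top_def by simp
qed

declare split_paired_All[simp del] split_paired_Ex[simp del]

lemma psi_alt: "psi k p m = (if 1 \<le> mdeg m \<and> mdeg m \<le> k then monom p m else 0)"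
  by (cases m) (simp add: psi_def mdeg_def monom_def)

lemma psi_inj: "1 \<le> k \<Longrightarrow> inj (psi k)"
proof (rule injI)
  fix a b assume k: "1 \<le> k" and h: "psi k a = psi k b"
  have "psi k a (1,0) = psi k b (1,0)" "psi k a (0,1) = psi k b (0,1)" using h by simp_all
  then show "a = b" using k by (simp add: psi_alt mdeg_def monom_def prod_eq_iff)
qed

lemma monom_00[simp]: "monom p (0,0) = 1" by (simp add: monom_def)
lemma mdeg_00[simp]: "mdeg (0,0) = 0" by (simp add: mdeg_def)

lemma eval_psi:
  "poly2_eval k c p = c (0,0) + (\<Sum>m\<in>exps k - {(0,0)}. c m * psi k p m)"
proof -
  have "poly2_eval k c p = c (0,0) * monom p (0,0) + (\<Sum>m\<in>exps k - {(0,0)}. c m * monom p m)"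
    unfolding poly2_eval_alt by (subst sum.remove[of _ "(0,0)"]) auto
  also have "(\<Sum>m\<in>exps k - {(0,0)}. c m * monom p m) = (\<Sum>m\<in>exps k - {(0,0)}. c m * psi k p m)"
  proof (rule sum.cong[OF refl])
    fix m assume m: "m \<in> exps k - {(0,0)}"
    then have "1 \<le> mdeg m" by (cases m) (auto simp: mdeg_def)
    then show "c m * monom p m = c m * psi k p m" using m by (simp add: psi_alt)
  qed
  finally show ?thesis by simp
qed

lemma Fl_eval:
  assumes "\<forall>p\<in>D. poly2_eval k c p = 0" "psi k b \<in> Fl (psi k ` D)"
  shows "poly2_eval k c b = 0"
proof -
  obtain T u where T: "finite T" "T \<noteq> {}" "T \<subseteq> psi k ` D" "sum u T = 1"
    "psi k b = (\<lambda>i. \<Sum>t\<in>T. u t * t i)"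
    using assms(2) unfolding Fl_def by blast
  have "poly2_eval k c b = c (0,0) + (\<Sum>m\<in>exps k - {(0,0)}. c m * (\<Sum>t\<in>T. u t * t m))"
    unfolding eval_psi T(5) ..
  also have "\<dots> = (\<Sum>t\<in>T. u t * (c (0,0) + (\<Sum>m\<in>exps k - {(0,0)}. c m * t m)))"
  proof -
    have 1: "(\<Sum>m\<in>exps k - {(0,0)}. c m * (\<Sum>t\<in>T. u t * t m))
        = (\<Sum>t\<in>T. u t * (\<Sum>m\<in>exps k - {(0,0)}. c m * t m))"
      unfolding sum_distrib_left by (subst sum.swap) (simp add: mult_ac)
    have 2: "(\<Sum>t\<in>T. u t * (c (0,0) + (\<Sum>m\<in>exps k - {(0,0)}. c m * t m)))
        = c (0,0) * sum u T + (\<Sum>t\<in>T. u t * (\<Sum>m\<in>exps k - {(0,0)}. c m * t m))"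
      by (simp add: distrib_left sum.distrib sum_distrib_left sum_distrib_right[symmetric] mult_ac)
    show ?thesis using 1 2 T(4) by simp
  qed
  also have "\<dots> = 0"
  proof (rule sum.neutral, rule ballI)
    fix t assume "t \<in> T"
    then obtain p where p: "p \<in> D" "t = psi k p" using T(3) by blast
    have "c (0,0) + (\<Sum>m\<in>exps k - {(0,0)}. c m * t m) = poly2_eval k c p"
      unfolding eval_psi p(2) ..
    then show "u t * (c (0,0) + (\<Sum>m\<in>exps k - {(0,0)}. c m * t m)) = 0"
      using assms(1) p(1) by simp
  qed
  finally show ?thesis .
qed

lemma Fl_vals:
  assumes "t \<in> Fl (psi k ` S)"
  shows "t (0,0) = 0" "\<And>m. \<not> mdeg m \<le> k \<Longrightarrow> t m = 0"
proof -
  obtain T u where T: "T \<subseteq> psi k ` S" "t = (\<lambda>i. \<Sum>s\<in>T. u s * s i)"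
    using assms unfolding Fl_def by blast
  have z: "s (0,0) = 0" "\<And>m. \<not> mdeg m \<le> k \<Longrightarrow> s m = 0" if "s \<in> T" for s
    using that T(1) by (auto simp: psi_alt)
  show "t (0,0) = 0" unfolding T(2) by (simp add: z)
  show "\<And>m. \<not> mdeg m \<le> k \<Longrightarrow> t m = 0" unfolding T(2) by (simp add: z)
qed

lemma psi_in_Fl: "p \<in> S \<Longrightarrow> psi k p \<in> Fl (psi k ` S)"
  unfolding Fl_def
  by (rule CollectI, rule exI[of _ "{psi k p}"], rule exI[of _ "\<lambda>_. 1"]) auto

lemma aff_card:
  assumes "T \<subseteq> Fl (psi k ` S)" "aff_indep T"
  shows "card T \<le> NN k"
proof (rule ccontr)
  assume "\<not> ?thesis"
  then have lt: "card (exps k) < card T" by (simp add: card_exps)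
  have fT: "finite T" using assms(2) by (simp add: aff_indep_def)
  define A :: "(nat \<times> nat \<Rightarrow> real) \<Rightarrow> nat \<times> nat \<Rightarrow> real"
    where "A = (\<lambda>t m. if m = (0,0) then 1 else t m)"
  obtain c where c: "\<exists>t\<in>T. c t \<noteq> 0" "\<forall>m\<in>exps k. (\<Sum>t\<in>T. c t * A t m) = (0::real)"
    using G_lemma[of "exps k" T A] fT lt by auto
  have "sum c T = 0" using c(2)[rule_format, of "(0,0)"] by (simp add: A_def)
  moreover have "(\<Sum>t\<in>T. c t * t i) = 0" for i
  proof -
    consider "i = (0,0)" | "i \<noteq> (0,0)" "mdeg i \<le> k" | "\<not> mdeg i \<le> k" by blast
    then show ?thesis
    proof cases
      case 1
      have "t (0,0) = 0" if "t \<in> T" for t using Fl_vals(1) assms(1) that by blast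
      then show ?thesis using 1 by (simp add: sum.neutral)
    next
      case 2 then show ?thesis using c(2)[rule_format, of i] by (simp add: A_def)
    next
      case 3
      have "t i = 0" if "t \<in> T" for t using Fl_vals(2) assms(1) that 3 by blast
      then show ?thesis by (simp add: sum.neutral)
    qed
  qed
  ultimately have "\<forall>t\<in>T. c t = 0" using assms(2) unfolding aff_indep_def by blast
  then show False using c(1) by blast
qed

lemma aff_M:
  assumes "indepP k M" "1 \<le> k"
  shows "aff_indep (psi k ` M)"
  unfolding aff_indep_def
proof (intro conjI allI impI)
  have fM: "finite M" using assms by (simp add: indepP_def)
  then show "finite (psi k ` M)" by simp
  have inj: "inj_on (psi k) M" using psi_inj[OF assms(2)] inj_on_subset by blast
  fix u assume h: "sum u (psi k ` M) = 0 \<and> (\<forall>i. (\<Sum>t\<in>psi k ` M. u t * t i) = 0)"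
  define u' where "u' = (\<lambda>p. u (psi k p))"
  have s0: "(\<Sum>p\<in>M. u' p) = 0" using h sum.reindex[OF inj, of u] by (simp add: u'_def comp_def)
  have s1: "(\<Sum>p\<in>M. u' p * psi k p i) = 0" for i
    using h sum.reindex[OF inj, of "\<lambda>t. u t * t i"] by (simp add: u'_def comp_def)
  have "(\<Sum>p\<in>M. u' p * phi k p m) = 0" for m
  proof -
    consider "m = (0,0)" | "m \<noteq> (0,0)" "mdeg m \<le> k" | "\<not> mdeg m \<le> k" by blast
    then show ?thesis
    proof cases
      case 1 then show ?thesis using s0 by (simp add: phi_def)
    next
      case 2
      then have "1 \<le> mdeg m" by (cases m) (auto simp: mdeg_def)
      then have "phi k p m = psi k p m" for p using 2 by (simp add: phi_def psi_alt)
      then show ?thesis using s1[of m] by simp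
    next
      case 3 then show ?thesis by (simp add: phi_def)
    qed
  qed
  then have "\<forall>p\<in>M. u' p = 0" using assms(1) unfolding indepP_def by blast
  then show "\<forall>t\<in>psi k ` M. u t = 0" unfolding u'_def by blast
qed

lemma flat_dim_ge:
  assumes "indepP k M" "M \<subseteq> S" "1 \<le> k"
  shows "int (card M) - 1 \<le> flat_dim (Fl (psi k ` S))"
proof -
  let ?F = "Fl (psi k ` S)"
  let ?C = "{card T | T. T \<subseteq> ?F \<and> aff_indep T}"
  have fin: "finite ?C"
  proof (rule finite_subset)
    show "?C \<subseteq> {..NN k}"
    proof
      fix x assume "x \<in> ?C"
      then obtain T where "x = card T" "T \<subseteq> ?F" "aff_indep T" by blast
      then show "x \<in> {..NN k}" using aff_card[of T k S] by simp
    qed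
  qed simp
  have sub: "psi k ` M \<subseteq> ?F" using psi_in_Fl assms(2) by blast
  have "card (psi k ` M) \<in> ?C" using sub aff_M[OF assms(1,3)] by blast
  then have "card (psi k ` M) \<le> Max ?C" using fin by simp
  moreover have "card (psi k ` M) = card M"
    using psi_inj[OF assms(3)] inj_on_subset card_image by blast
  ultimately show ?thesis unfolding flat_dim_def by simp
qed

lemma Zf_trivial:
  assumes "\<not> (\<exists>C. curve_le f C \<and> B \<subseteq> C)" "B \<noteq> {}" "c \<in> Z f B"
  shows "supp c = {}"
proof (rule ccontr)
  assume sc: "supp c \<noteq> {}"
  have bc: "bnd f c" using assms(3) by (simp add: Z_def)
  have fc: "finite (supp c)" using bnd_finite[OF bc] .
  define j where "j = mdeg (LM c)"
  have bj: "bnd j c" unfolding j_def using LM_bnd[OF bc sc] .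
  have cL: "c (LM c) \<noteq> 0" using LM(1)[OF fc sc] .
  have jf: "j \<le> f" using cL bc unfolding j_def bnd_def by blast
  have ev: "poly2_eval j c p = 0" if "p \<in> B" for p
    using eval_bnd[OF bj jf, of p] assms(3) that by (simp add: Z_def)
  show False
  proof (cases "j = 0")
    case True
    have "LM c = (0,0)" using True unfolding j_def mdeg_def by (simp add: prod_eq_iff)
    have "exps 0 = {(0,0)}" by (auto simp: mdeg_def prod_eq_iff)
    then have "poly2_eval 0 c p = c (0,0)" for p by (simp add: poly2_eval_alt)
    moreover obtain p where "p \<in> B" using assms(2) by blast
    ultimately have "c (0,0) = 0" using ev[of p] True by simp
    then show False using cL \<open>LM c = (0,0)\<close> by simp
  next
    case False
    define C where "C = {p. poly2_eval j c p = 0}"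
    have "curve_of_degree j C"
      unfolding curve_of_degree_def
    proof (intro exI[of _ c] conjI)
      show "\<forall>i ja. j < i + ja \<longrightarrow> c (i, ja) = 0" using bj unfolding bnd_def mdeg_def by force
      show "\<exists>i ja. i + ja = j \<and> c (i, ja) \<noteq> 0"
        using cL unfolding j_def mdeg_def by (intro exI[of _ "fst (LM c)"] exI[of _ "snd (LM c)"]) simp
      show "C = {p. poly2_eval j c p = 0}" by (simp add: C_def)
    qed
    then have "curve_le f C" using False jf unfolding curve_le_def by force
    moreover have "B \<subseteq> C" using ev by (auto simp: C_def)
    ultimately show False using assms(1) by blast
  qed
qed

lemma arith_core:
  fixes L x y a b p q g Nf Nd Nde tx ty :: int
  assumes L1: "L \<ge> 1" and x0: "x \<ge> 0" and y0: "y \<ge> 0" and d3: "2*L + x + y \<ge> 3"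
    and dNf: "2*Nf = (L+x+y+1)*(L+x+y+2)" and dNd: "2*Nd = (2*L+x+y+1)*(2*L+x+y+2)"
    and dNde: "2*Nde = (L+y+1)*(L+y+2)"
    and dtx: "2*tx = x*(x+1)" and dty: "2*ty = y*(y+1)"
    and H1: "a + y*p + ty + g \<le> Nf" and H2: "b + x*q + tx \<le> g"
    and H3: "a \<le> L*p" and H4: "b \<le> L*q" and H5: "p \<le> L+x+1" and H6: "q \<le> L+y+1"
    and a1: "a \<ge> 1" and b2: "b \<ge> 2" and gm: "g \<le> Nd - Nde - 1"
  shows "a + b + Nf + (if g < Nd - Nde - 1 then 1 else 0) \<le> Nd"
proof -
  have h1: "(L+y)*a \<le> L*(Nf - g - ty)"
  proof -
    have "y*a \<le> y*(L*p)" using H3 y0 by (rule mult_left_mono)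
    moreover have "L*(a + y*p) \<le> L*(Nf - g - ty)" using H1 L1 by (intro mult_left_mono) auto
    ultimately show ?thesis by (simp add: algebra_simps)
  qed
  have h2: "(L+x)*b \<le> L*(g - tx)"
  proof -
    have "x*b \<le> x*(L*q)" using H4 x0 by (rule mult_left_mono)
    moreover have "L*(b + x*q) \<le> L*(g - tx)" using H2 L1 by (intro mult_left_mono) auto
    ultimately show ?thesis by (simp add: algebra_simps)
  qed
  have "L*p \<le> L*(L+x+1)" using H5 L1 by (intro mult_left_mono) auto
  then have aL: "a \<le> L*(L+x+1)" using H3 by simp
  have "L*q \<le> L*(L+y+1)" using H6 L1 by (intro mult_left_mono) auto
  then have bL: "b \<le> L*(L+y+1)" using H4 by simp
  show ?thesis
  proof (cases "y \<le> x")
    case True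
    have s1: "(L+x)*(a+b) \<le> (x-y)*a + L*(Nf - tx - ty)"
      using h1 h2 by (simp add: algebra_simps)
    have s2: "(x-y)*a \<le> (x-y)*(L*(L+x+1))" using aL True by (intro mult_left_mono) auto
    define Zs where "Zs = 2*L*L + L*x + 2*L*y + 2*x*y - x - 2"
    have idt: "2*((x-y)*(L*(L+x+1)) + L*(Nf - tx - ty)) + L*Zs = 2*(L+x)*(Nd - Nf)"
      unfolding Zs_def using dNf dNd dtx dty by algebra
    show ?thesis
    proof (cases "L = 1 \<and> y = 0")
      case False
      have "Zs \<ge> 1"
      proof (cases "L \<ge> 2")
        case True
        have "L*L \<ge> 2*L" using True L1 by (intro mult_right_mono) auto
        moreover have "L*x \<ge> x" using L1 x0 by (metis mult_le_cancel_right1 mult.commute not_le order_less_le order_refl)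
        moreover have "L*y \<ge> 0" "x*y \<ge> 0" using L1 x0 y0 by auto
        ultimately show ?thesis unfolding Zs_def using True by linarith
      next
        case False
        then have "L = 1" "y \<ge> 1" using L1 \<open>\<not> (L = 1 \<and> y = 0)\<close> y0 by auto
        moreover have "x*y \<ge> 0" using x0 y0 by auto
        ultimately show ?thesis unfolding Zs_def by simp
      qed
      then have "L*Zs \<ge> 1" using L1 by (metis mult_le_cancel_right1 mult.commute mult_le_cancel_left1 order_trans zero_less_one_class.zero_le_one le_less_trans linorder_not_le zero_less_mult_iff)
      then have "(L+x)*(a+b) < (L+x)*(Nd - Nf)" using s1 s2 idt by (simp add: algebra_simps)
      then have "a + b < Nd - Nf" using L1 x0 by (simp add: mult_less_cancel_left)
      then show ?thesis by simp
    next
      case bd: True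
      then have "L = 1" "y = 0" by auto
      have "b \<le> 2" using bL bd by simp
      then have "b = 2" using b2 by simp
      have "2*(1+x) \<le> g - tx" using h2 \<open>b = 2\<close> bd by (simp add: algebra_simps)
      moreover have "a \<le> Nf - g" using h1 bd dty by simp
      moreover have "2*Nf - 2*tx = 4*x + 6" using dNf dtx bd by (simp add: algebra_simps)
      moreover have "2*Nd - 2*Nf = 2*x + 6" using dNf dNd bd by (simp add: algebra_simps)
      moreover have "x \<ge> 1" using d3 bd by simp
      ultimately show ?thesis using \<open>b = 2\<close> by simp
    qed
  next
    case False
    have s1: "(L+y)*(a+b) \<le> (y-x)*b + L*(Nf - tx - ty)"
      using h1 h2 by (simp add: algebra_simps)
    have s2: "(y-x)*b \<le> (y-x)*(L*(L+y+1))" using bL False by (intro mult_left_mono) auto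
    define Zs where "Zs = 2*L*L + L*y + 2*L*x + 2*x*y - y - 2"
    have idt: "2*((y-x)*(L*(L+y+1)) + L*(Nf - tx - ty)) + L*Zs = 2*(L+y)*(Nd - Nf)"
      unfolding Zs_def using dNf dNd dtx dty by algebra
    show ?thesis
    proof (cases "L = 1 \<and> x = 0")
      case False
      have "Zs \<ge> 1"
      proof (cases "L \<ge> 2")
        case True
        have "L*L \<ge> 2*L" using True L1 by (intro mult_right_mono) auto
        moreover have "L*y \<ge> y" using L1 y0 by (metis mult_le_cancel_right1 mult.commute not_le order_less_le order_refl)
        moreover have "L*x \<ge> 0" "x*y \<ge> 0" using L1 x0 y0 by auto
        ultimately show ?thesis unfolding Zs_def using True by linarith
      next
        case False
        then have "L = 1" "x \<ge> 1" using L1 \<open>\<not> (L = 1 \<and> x = 0)\<close> x0 by auto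
        moreover have "x*y \<ge> 0" using x0 y0 by auto
        ultimately show ?thesis unfolding Zs_def by simp
      qed
      then have "L*Zs \<ge> 1" using L1 by (metis mult_le_cancel_right1 mult.commute mult_le_cancel_left1 order_trans zero_less_one_class.zero_le_one le_less_trans linorder_not_le zero_less_mult_iff)
      then have "(L+y)*(a+b) < (L+y)*(Nd - Nf)" using s1 s2 idt by (simp add: algebra_simps)
      then have "a + b < Nd - Nf" using L1 y0 by (simp add: mult_less_cancel_left)
      then show ?thesis by simp
    next
      case bd: True
      then have "L = 1" "x = 0" by auto
      have a2: "a \<le> 2" using aL bd by simp
      have hb: "b \<le> g" using h2 bd dtx by simp
      have ha: "(1+y)*a \<le> Nf - g - ty" using h1 bd by simp
      have e1: "2*Nf - 2*ty = 4*y + 6" using dNf dty bd by (simp add: algebra_simps)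
      have e2: "2*Nd - 2*Nde = 2*y + 6" using dNd dNde bd by (simp add: algebra_simps)
      have e3: "2*Nd - 2*Nf = 2*y + 6" using dNf dNd bd by (simp add: algebra_simps)
      have "a = 1"
      proof (rule ccontr)
        assume "a \<noteq> 1"
        then have "a = 2" using a1 a2 by simp
        then have "2 + 2*y \<le> Nf - g - ty" using ha by (simp add: algebra_simps)
        then show False using e1 hb b2 by simp
      qed
      then have "1 + y \<le> Nf - g - ty" using ha by simp
      then show ?thesis using e1 e2 e3 hb \<open>a = 1\<close> by simp
    qed
  qed
qed

lemma eF_ge:
  fixes e F :: int
  assumes "e \<ge> 1" "F \<ge> 1"
  shows "e*F \<ge> 1" "e + F \<ge> 3 \<Longrightarrow> e*F \<ge> 2"
proof -
  have "e*F \<ge> 1*1" using assms by (intro mult_mono) auto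
  then show "e*F \<ge> 1" by simp
  assume s: "e + F \<ge> 3"
  show "e*F \<ge> 2"
  proof (cases "e \<ge> 2")
    case True
    have "e*F \<ge> 2*1" using True assms by (intro mult_mono) auto
    then show ?thesis by simp
  next
    case False
    then have "e = 1" using assms by simp
    then show ?thesis using s by simp
  qed
qed

lemma A_mu1:
  fixes e F Ne NF Nd :: int
  assumes "e \<ge> 1" "F \<ge> 1" "2*Nd = (e+F+1)*(e+F+2)" "2*Ne = (e+1)*(e+2)" "2*NF = (F+1)*(F+2)"
  shows "Ne + NF \<le> Nd" "e + F \<ge> 3 \<Longrightarrow> Ne + NF + 1 \<le> Nd"
proof -
  have h: "2*(Nd - Ne - NF) = 2*(e*F) - 2" using assms(3-5) by algebra
  then show "Ne + NF \<le> Nd" using eF_ge(1)[OF assms(1,2)] by (smt (verit))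
  assume "e + F \<ge> 3"
  then show "Ne + NF + 1 \<le> Nd" using h eF_ge(2)[OF assms(1,2)] by (smt (verit))
qed

lemma A_mu2:
  fixes e F j L Nf NF Nd tj :: int
  assumes "e \<ge> 1" "L \<ge> 1" "j \<ge> 0"
    "2*Nd = (e+j+L+1)*(e+j+L+2)" "2*Nf = (e+j+1)*(e+j+2)" "2*NF = (j+L+1)*(j+L+2)"
    "2*tj = j*(j+1)"
  shows "Nf + NF + e*L = Nd + 1 + j + tj" "e*L \<ge> 1" "e + L \<ge> 3 \<Longrightarrow> e*L \<ge> 2"
proof -
  have "2*(Nd - NF - Nf + 1 + j + tj) = 2*(e*L)" using assms(4-7) by algebra
  then show "Nf + NF + e*L = Nd + 1 + j + tj" by (smt (verit))
  show "e*L \<ge> 1" "e + L \<ge> 3 \<Longrightarrow> e*L \<ge> 2" using eF_ge[OF assms(1,2)] by auto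
qed

declare split_paired_All[simp del] split_paired_Ex[simp del]

lemma Z_lower:
  assumes "z \<in> Z k S" "supp z \<noteq> {}"
  shows "z \<in> Z (mdeg (LM z)) S"
proof -
  have bz: "bnd k z" using assms by (simp add: Z_def)
  have b0: "bnd (mdeg (LM z)) z" using LM_bnd[OF bz assms(2)] .
  have "mdeg (LM z) \<le> k" using LM(1)[OF bnd_finite[OF bz] assms(2)] bz unfolding bnd_def by blast
  then have "poly2_eval (mdeg (LM z)) z p = poly2_eval k z p" for p using eval_bnd[OF b0, of k p] by simp
  then show ?thesis using assms(1) b0 by (simp add: Z_def)
qed

lemma Z_raise:
  assumes "c \<in> Z k S" "k \<le> k'"
  shows "c \<in> Z k' S"
proof -
  have b: "bnd k c" using assms(1) by (simp add: Z_def)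
  have "poly2_eval k' c p = poly2_eval k c p" for p using eval_bnd[OF b assms(2)] .
  then show ?thesis using assms(1) bnd_mono[OF b assms(2)] by (simp add: Z_def)
qed

lemma no_low:
  assumes "\<forall>c\<in>Z f B. supp c = {}" "S1 \<union> S2 = B" "x \<in> lms k1 S1" "y \<in> lms k2 S2"
    "mdeg x + mdeg y \<le> f"
  shows False
proof -
  obtain z where z: "z \<in> Z k1 S1" "supp z \<noteq> {}" "LM z = x" using assms(3) unfolding lms_def by blast
  obtain w where w: "w \<in> Z k2 S2" "supp w \<noteq> {}" "LM w = y" using assms(4) unfolding lms_def by blast
  have z': "z \<in> Z (mdeg x) S1" using Z_lower[OF z(1,2)] z(3) by simp
  have w': "w \<in> Z (mdeg y) S2" using Z_lower[OF w(1,2)] w(3) by simp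
  obtain c where c: "c \<in> Z (mdeg x + mdeg y) (S1 \<union> S2)" "supp c \<noteq> {}"
    using domain_Z[OF z' w' z(2) w(2)] by blast
  have "c \<in> Z f B" using Z_raise[OF c(1) assms(5)] assms(2) by simp
  then show False using assms(1) c(2) by blast
qed

lemma NN_int: "2 * int (NN k) = (int k + 1) * (int k + 2)"
proof -
  have "int (2 * NN k) = int ((k + 1) * (k + 2))" using NN_twice[of k] by simp
  then show ?thesis by (simp add: algebra_simps)
qed

lemma tri_int: "2 * int (tri j) = int j * (int j + 1)"
proof -
  have "2 * tri j = j * (j + 1)" by (induction j) (auto simp: algebra_simps)
  then have "int (2 * tri j) = int (j * (j + 1))" by simp
  then show ?thesis by (simp add: algebra_simps)
qed

declare split_paired_All[simp del] split_paired_Ex[simp del]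

lemma up_lms:
  assumes "x \<in> lms k S" "cle x t" "mdeg t \<le> k'"
  shows "t \<in> lms k' S"
  using lms_up[OF assms] .

lemma cle_refl: "cle x x" by (simp add: cle_def)

lemma lms_deg: "x \<in> lms k S \<Longrightarrow> mdeg x \<le> k"
  using lms_sub[of k S] mem_exps by blast

lemma growth:
  assumes "x \<in> lms e S" "e \<le> f"
  shows "card (lms e S) + (f - e) * card {x\<in>lms e S. mdeg x = e} + tri (f - e) \<le> card (lms f S)"
    "card {x\<in>lms e S. mdeg x = e} \<ge> 1"
proof -
  have up: "\<forall>x\<in>lms e S. \<forall>t. cle x t \<and> mdeg t \<le> e \<longrightarrow> t \<in> lms e S"
    using up_lms by blast
  have tne: "{x\<in>lms e S. mdeg x = e} \<noteq> {}" using K0[OF assms(1) lms_deg[OF assms(1)] up] .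
  then show "card {x\<in>lms e S. mdeg x = e} \<ge> 1"
    using finite_lms[of e S] by (simp add: Suc_le_eq card_gt_0_iff)
  show "card (lms e S) + (f - e) * card {x\<in>lms e S. mdeg x = e} + tri (f - e) \<le> card (lms f S)"
  proof (rule K2[OF finite_lms])
    show "lms e S \<subseteq> lms f S" using up_lms[OF _ cle_refl] lms_deg assms(2) by (meson le_trans subsetI)
    show "\<forall>x\<in>lms e S. mdeg x \<le> e" using lms_deg by blast
    show "\<forall>x\<in>lms e S. \<forall>t. cle x t \<and> mdeg t \<le> e + (f - e) \<longrightarrow> t \<in> lms f S"
      using up_lms assms(2) by simp
    show "{x\<in>lms e S. mdeg x = e} \<noteq> {}" using tne .
  qed
qed

lemma levels:
  assumes "\<forall>x\<in>lms e S. h < mdeg x"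
  shows "card (lms e S) \<le> (e - h) * card {x\<in>lms e S. mdeg x = e}"
proof (rule K1[OF finite_lms])
  show "\<forall>x\<in>lms e S. h < mdeg x \<and> mdeg x \<le> e" using assms lms_deg by blast
  show "\<forall>x\<in>lms e S. \<forall>t. cle x t \<and> mdeg t \<le> e \<longrightarrow> t \<in> lms e S" using up_lms by blast
qed

lemma NN_sum: "int k = s \<Longrightarrow> 2 * int (NN k) = (s + 1) * (s + 2)"
  using NN_int[of k] by simp

theorem lemma25:
  fixes d f :: nat and B :: "(real \<times> real) set"
  assumes "d \<ge> 3" and "f \<le> d - 1"
    and "finite B" and "card B = (f + 2) choose 2"
    and "\<not> (\<exists>C. curve_le f C \<and> B \<subseteq> C)"
  shows "\<forall>e\<in>{1..d - 1}. \<forall>D. D \<subseteq> B \<longrightarrow>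
           max (tau_e d e B D) (mu_e d e B D) < int ((d + 2) choose 2)"
proof (intro ballI allI impI)
  fix e D assume eI: "e \<in> {1..d - 1}" and DB: "D \<subseteq> B"
  have d3: "d \<ge> 3" and fd: "f < d" using assms(1,2) by auto
  have e1: "1 \<le> e" and ed: "e < d" using eI assms(1) by auto
  have fB: "finite B" using assms(3) .
  have cB: "card B = NN f" using assms(4) by (simp add: NN_def)
  have fD: "finite D" using DB fB finite_subset by blast
  have Bne: "B \<noteq> {}" using cB NN_twice[of f] by auto
  have Ztriv: "\<forall>c\<in>Z f B. supp c = {}" using Zf_trivial[OF assms(5) Bne] by blast
  have lmsfB: "lms f B = {}" using Ztriv unfolding lms_def by blast
  have indB: "indepP f B"
  proof -
    obtain M where M: "M \<subseteq> B" "indepP f M" "NN f \<le> card M + card (lms f B)"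
      using D1[OF fB, of f] by blast
    have "card M \<le> card B" using card_mono[OF fB M(1)] .
    then have "card M = card B" using M(3) lmsfB cB by simp
    then have "M = B" using card_subset_eq[OF fB M(1)] by simp
    then show ?thesis using M(2) by simp
  qed
  have D2': "card S + card (lms k S) \<le> NN k" if "f \<le> k" "S \<subseteq> B" for k S
    using D2[OF indepP_mono[OF indepP_subset[OF indB that(2)] that(1)]] .
  define V where "V = V_e e D"
  define D' where "D' = {b\<in>B. psi e b \<in> V}"
  define R where "R = B - {a. psi e a \<in> V}"
  have D'B: "D' \<subseteq> B" and RB: "R \<subseteq> B" and DR: "D' \<union> R = B" and RD': "R = B - D'"
    unfolding D'_def R_def by auto
  have fD': "finite D'" and fR: "finite R" using D'B RB fB finite_subset by blast+
  have cR: "card R = NN f - card D'" using RD' cB card_Diff_subset[OF fD' D'B] by simp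
  have cD'le: "card D' \<le> NN f" using card_mono[OF fB D'B] cB by simp
  define g where "g = card D'"
  define a where "a = card (lms e D')"
  define b where "b = card (lms (d - e) R)"
  have gam: "gamma_e e B D = g"
  proof -
    have "V_e e D \<inter> psi e ` B = psi e ` D'" unfolding D'_def V_def by auto
    moreover have "inj_on (psi e) D'" using psi_inj[OF e1] inj_on_subset by blast
    ultimately show ?thesis unfolding gamma_e_def g_def by (simp add: card_image)
  qed
  have alpha: "alpha_e e D \<le> int a - 1"
  proof -
    obtain M where M: "M \<subseteq> D" "indepP e M" "NN e \<le> card M + card (lms e D)"
      using D1[OF fD, of e] by blast
    have fl: "int (card M) - 1 \<le> flat_dim (V_e e D)"
      unfolding V_e_def using flat_dim_ge[OF M(2,1) e1] .
    have "Z e D \<subseteq> Z e D'"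
    proof
      fix c assume c: "c \<in> Z e D"
      have "poly2_eval e c p = 0" if "p \<in> D'" for p
        using Fl_eval[of D e c p] c that unfolding D'_def V_def V_e_def Z_def by blast
      then show "c \<in> Z e D'" using c by (simp add: Z_def)
    qed
    then have "lms e D \<subseteq> lms e D'" unfolding lms_def by blast
    then have "card (lms e D) \<le> a" unfolding a_def by (rule card_mono[OF finite_lms])
    then show ?thesis using M(3) fl unfolding alpha_e_def NN_def by linarith
  qed
  have beta: "beta_e d e B D \<le> int b - 2"
  proof -
    obtain M where M: "M \<subseteq> R" "indepP (d - e) M" "NN (d - e) \<le> card M + card (lms (d - e) R)"
      using D1[OF fR, of "d - e"] by blast
    have de1: "1 \<le> d - e" using ed by simp
    have fl: "int (card M) - 1 \<le> flat_dim (W_e d e B D)"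
      unfolding W_e_def using flat_dim_ge[OF M(2,1) de1] unfolding R_def V_def by simp
    then show ?thesis using M(3) unfolding beta_e_def NN_def b_def by linarith
  qed
  have NNint: "2 * int (NN k) = (int k + 1) * (int k + 2)" for k by (rule NN_int)
  have triint: "2 * int (tri j) = int j * (int j + 1)" for j by (rule tri_int)
  have ex_of_card: "\<exists>z. z \<in> A" if "1 \<le> card A" for A :: "(nat \<times> nat) set"
    using that by (metis One_nat_def card.empty ex_in_conv not_one_le_zero)
  define m where "m = int (NN d) - int (NN (d - e)) - 1"
  have key_mu: "int a + int g \<le> int (NN d) - int (NN (d - e))" if a1: "1 \<le> a"
  proof -
    obtain x where x: "x \<in> lms e D'" using ex_of_card[of "lms e D'"] a1 unfolding a_def by blast
    show ?thesis
    proof (cases "f < e")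
      case True
      have h: "g + a \<le> NN e" using D2'[of e D'] True D'B unfolding g_def a_def by simp
      have i1: "int d = int e + int (d - e)" using ed by simp
      have L1: "int e \<ge> 1" "int (d - e) \<ge> 1" using e1 ed by auto
      have "int (NN e) + int (NN (d - e)) \<le> int (NN d)"
        using A_mu1(1)[OF L1 NN_sum[OF i1] NN_int NN_int] .
      then show ?thesis using h by linarith
    next
      case False
      then have ef: "e \<le> f" by simp
      define p where "p = card {x\<in>lms e D'. mdeg x = e}"
      have g1: "a + (f - e) * p + tri (f - e) \<le> card (lms f D')" "p \<ge> 1"
        using growth[OF x ef] unfolding a_def p_def by auto
      have g2: "g + card (lms f D') \<le> NN f" using D2'[of f D'] D'B unfolding g_def by simp
      have "(f - e) * 1 \<le> (f - e) * p" using g1(2) by (rule mult_left_mono) simp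
      then have h: "a + g + (f - e) + tri (f - e) \<le> NN f" using g1 g2 by linarith
      have i1: "int d = int e + int (f - e) + int (d - f)" using ef fd by simp
      have i2: "int f = int e + int (f - e)" using ef by simp
      have i3: "int (d - e) = int (f - e) + int (d - f)" using ef fd by simp
      have L1: "int (d - f) \<ge> 1" "int e \<ge> 1" "int (f - e) \<ge> 0" using fd e1 by auto
      note A = A_mu2[OF L1(2) L1(1) L1(3) NN_sum[OF i1] NN_sum[OF i2] NN_sum[OF i3] tri_int]
      then show ?thesis using h by linarith
    qed
  qed
  have key_tau: "int a + int b + int (NN f) + (if int g < m then 1 else 0) \<le> int (NN d)"
    if a1: "1 \<le> a" and b2: "2 \<le> b" and gm: "int g \<le> m"
  proof -
    obtain x where x: "x \<in> lms e D'" using ex_of_card[of "lms e D'"] a1 unfolding a_def by blast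
    obtain y where y: "y \<in> lms (d - e) R" using ex_of_card[of "lms (d - e) R"] b2 unfolding b_def by fastforce
    have cRi: "int (card R) = int (NN f) - int g" using cR cD'le unfolding g_def by simp
    consider (i) "f < e" "f < d - e" | (ii) "f < e" "d - e \<le> f" | (iii) "e \<le> f" "f < d - e"
      | (iv) "e \<le> f" "d - e \<le> f" by linarith
    then show ?thesis
    proof cases
      case i
      have h1: "g + a \<le> NN e" using D2'[of e D'] i D'B unfolding g_def a_def by simp
      have h2: "card R + b \<le> NN (d - e)" using D2'[of "d - e" R] i RB unfolding b_def by simp
      have i1: "int d = int e + int (d - e)" using ed by simp
      have L1: "int e \<ge> 1" "int (d - e) \<ge> 1" using e1 ed by auto
      have "int e + int (d - e) \<ge> 3" using d3 ed by simp
      then have "int (NN e) + int (NN (d - e)) + 1 \<le> int (NN d)"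
        using A_mu1(2)[OF L1 NN_sum[OF i1] NN_int NN_int] by blast
      then have "int a + int b + int (NN f) + 1 \<le> int (NN d)" using h1 h2 cRi by linarith
      then show ?thesis by simp
    next
      case ii
      have h1: "g + a \<le> NN e" using D2'[of e D'] ii D'B unfolding g_def a_def by simp
      define q where "q = card {x\<in>lms (d - e) R. mdeg x = d - e}"
      have g1: "b + (f - (d - e)) * q + tri (f - (d - e)) \<le> card (lms f R)" "q \<ge> 1"
        using growth[OF y ii(2)] unfolding b_def q_def by auto
      have g2: "card R + card (lms f R) \<le> NN f" using D2'[of f R] RB by simp
      have "(f - (d - e)) * 1 \<le> (f - (d - e)) * q" using g1(2) by (rule mult_left_mono) simp
      then have h2: "int b + int (f - (d - e)) + int (tri (f - (d - e))) \<le> int g"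
        using g1 g2 cRi by linarith
      have i1: "int d = int (d - e) + int (f - (d - e)) + int (d - f)" using ii fd ed by simp
      have i2: "int f = int (d - e) + int (f - (d - e))" using ii ed by simp
      have i3: "int e = int (f - (d - e)) + int (d - f)" using ii fd ed by simp
      have L1: "int (d - f) \<ge> 1" "int (d - e) \<ge> 1" "int (f - (d - e)) \<ge> 0" using fd ed by auto
      note A = A_mu2[OF L1(2) L1(1) L1(3) NN_sum[OF i1] NN_sum[OF i2] NN_sum[OF i3] tri_int]
      have "int (d - e) + int (d - f) \<ge> 3" using ii fd ed by linarith
      then have "int (d - e) * int (d - f) \<ge> 2" using A(3) by blast
      then have "int a + int b + int (NN f) + 1 \<le> int (NN d)" using A(1) h1 h2 by linarith
      then show ?thesis by simp
    next
      case iii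
      define p where "p = card {x\<in>lms e D'. mdeg x = e}"
      have g1: "a + (f - e) * p + tri (f - e) \<le> card (lms f D')" "p \<ge> 1"
        using growth[OF x iii(1)] unfolding a_def p_def by auto
      have g2: "g + card (lms f D') \<le> NN f" using D2'[of f D'] D'B unfolding g_def by simp
      have "(f - e) * 1 \<le> (f - e) * p" using g1(2) by (rule mult_left_mono) simp
      then have h1: "int a + int g + int (f - e) + int (tri (f - e)) \<le> int (NN f)" using g1 g2 by linarith
      have h2: "card R + b \<le> NN (d - e)" using D2'[of "d - e" R] iii RB unfolding b_def by simp
      have i1: "int d = int e + int (f - e) + int (d - f)" using iii fd by simp
      have i2: "int f = int e + int (f - e)" using iii by simp
      have i3: "int (d - e) = int (f - e) + int (d - f)" using iii fd by simp
      have L1: "int (d - f) \<ge> 1" "int e \<ge> 1" "int (f - e) \<ge> 0" using fd e1 by auto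
      note A = A_mu2[OF L1(2) L1(1) L1(3) NN_sum[OF i1] NN_sum[OF i2] NN_sum[OF i3] tri_int]
      have "int e + int (d - f) \<ge> 3" using iii fd ed e1 by linarith
      then have "int e * int (d - f) \<ge> 2" using A(3) by blast
      then have "int a + int b + int (NN f) + 1 \<le> int (NN d)" using A(1) h1 h2 cRi by linarith
      then show ?thesis by simp
    next
      case iv
      define p where "p = card {x\<in>lms e D'. mdeg x = e}"
      define q where "q = card {x\<in>lms (d - e) R. mdeg x = d - e}"
      have gx: "a + (f - e) * p + tri (f - e) \<le> card (lms f D')" "p \<ge> 1"
        using growth[OF x iv(1)] unfolding a_def p_def by auto
      have gy: "b + (f - (d - e)) * q + tri (f - (d - e)) \<le> card (lms f R)" "q \<ge> 1"
        using growth[OF y iv(2)] unfolding b_def q_def by auto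
      have g2: "g + card (lms f D') \<le> NN f" using D2'[of f D'] D'B unfolding g_def by simp
      have g3: "card R + card (lms f R) \<le> NN f" using D2'[of f R] RB by simp
      have lx: "\<forall>x'\<in>lms e D'. f - (d - e) < mdeg x'"
      proof
        fix x' assume x': "x' \<in> lms e D'"
        show "f - (d - e) < mdeg x'"
        proof (rule ccontr)
          assume "\<not> ?thesis"
          then have "mdeg x' + mdeg y \<le> f" using lms_deg[OF y] iv by linarith
          then show False using no_low[OF Ztriv DR x' y] by blast
        qed
      qed
      have ly: "\<forall>y'\<in>lms (d - e) R. f - e < mdeg y'"
      proof
        fix y' assume y': "y' \<in> lms (d - e) R"
        show "f - e < mdeg y'"
        proof (rule ccontr)
          assume "\<not> ?thesis"
          then have "mdeg x + mdeg y' \<le> f" using lms_deg[OF x] iv by linarith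
          then show False using no_low[OF Ztriv DR x y'] by blast
        qed
      qed
      have H3: "a \<le> (d - f) * p"
        using levels[OF lx] iv fd unfolding a_def p_def by (simp add: algebra_simps)
      have H4: "b \<le> (d - f) * q"
        using levels[OF ly] iv fd unfolding b_def q_def by (simp add: algebra_simps)
      have H5: "p \<le> e + 1" unfolding p_def by (rule top_card)
      have H6: "q \<le> d - e + 1" unfolding q_def by (rule top_card)
      define Li where "Li = int (d - f)"
      define xi where "xi = int (f - (d - e))"
      define yi where "yi = int (f - e)"
      have ed': "int e = Li + xi" "int (d - e) = Li + yi" "int f = Li + xi + yi" "int d = 2*Li + xi + yi"
        using iv fd ed unfolding Li_def xi_def yi_def by auto
      have "int a + int b + int (NN f) + (if int g < int (NN d) - int (NN (d - e)) - 1 then 1 else 0) \<le> int (NN d)"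
      proof (rule arith_core[where p = "int p" and q = "int q" and tx = "int (tri (f - (d - e)))"
            and ty = "int (tri (f - e))" and L = Li and x = xi and y = yi])
        show "Li \<ge> 1" "xi \<ge> 0" "yi \<ge> 0" using fd unfolding Li_def xi_def yi_def by auto
        show "2*Li + xi + yi \<ge> 3" using ed'(4) d3 by linarith
        show "2 * int (NN f) = (Li + xi + yi + 1) * (Li + xi + yi + 2)" using NN_sum[OF ed'(3)] .
        show "2 * int (NN d) = (2*Li + xi + yi + 1) * (2*Li + xi + yi + 2)" using NN_sum[OF ed'(4)] .
        show "2 * int (NN (d - e)) = (Li + yi + 1) * (Li + yi + 2)" using NN_sum[OF ed'(2)] .
        show "2 * int (tri (f - (d - e))) = xi * (xi + 1)" unfolding xi_def by (rule tri_int)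
        show "2 * int (tri (f - e)) = yi * (yi + 1)" unfolding yi_def by (rule tri_int)
        have "int (a + (f - e) * p + tri (f - e) + g) \<le> int (NN f)" using gx g2 by linarith
        then show "int a + yi * int p + int (tri (f - e)) + int g \<le> int (NN f)"
          unfolding yi_def by simp
        have "int (b + (f - (d - e)) * q + tri (f - (d - e))) \<le> int g" using gy g3 cRi by linarith
        then show "int b + xi * int q + int (tri (f - (d - e))) \<le> int g"
          unfolding xi_def by simp
        show "int a \<le> Li * int p" using H3 unfolding Li_def by (simp flip: of_nat_mult)
        show "int b \<le> Li * int q" using H4 unfolding Li_def by (simp flip: of_nat_mult)
        show "int p \<le> Li + xi + 1" using H5 ed'(1) by linarith
        show "int q \<le> Li + yi + 1" using H6 ed'(2) ed by linarith
        show "int a \<ge> 1" "int b \<ge> 2" using a1 b2 by auto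
        show "int g \<le> int (NN d) - int (NN (d - e)) - 1" using gm unfolding m_def .
      qed
      then show ?thesis unfolding m_def .
    qed
  qed
  have NNd_pos: "int (NN d) > 0" using NN_twice[of d] by simp
  have eqd: "int ((d + 2) choose 2) = int (NN d)" by (simp add: NN_def)
  have mu_bound: "mu_e d e B D < int (NN d)"
  proof (cases "alpha_e e D < 0")
    case True then show ?thesis using NNd_pos unfolding mu_e_def by simp
  next
    case False
    then have a1: "1 \<le> a" using alpha by linarith
    have "mu_e d e B D = alpha_e e D + int g + int (NN (d - e))"
      using False gam unfolding mu_e_def NN_def by simp
    then show ?thesis using key_mu[OF a1] alpha by linarith
  qed
  have tau_bound: "tau_e d e B D < int (NN d)"
  proof (cases "min (alpha_e e D) (beta_e d e B D) < 0 \<or> int g > m")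
    case True
    then show ?thesis using NNd_pos gam unfolding tau_e_def Let_def m_def NN_def by auto
  next
    case False
    then have a1: "1 \<le> a" and b2: "2 \<le> b" and gm: "int g \<le> m" using alpha beta by auto
    have k: "int a + int b + int (NN f) + (if int g < m then 1 else 0) \<le> int (NN d)"
      using key_tau[OF a1 b2 gm] .
    have "tau_e d e B D \<le> alpha_e e D + beta_e d e B D + int (NN f) + 2 + (if int g < m then 1 else 0)"
      using False gam cB unfolding tau_e_def Let_def m_def NN_def by auto
    then show ?thesis using k alpha beta by linarith
  qed
  show "max (tau_e d e B D) (mu_e d e B D) < int ((d + 2) choose 2)"
    using mu_bound tau_bound eqd by simp
qed

end
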